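(* In an execution of Algorithm A2 (described in the context) with $n>3t$ and a strong $(t+1)$ common coin, suppose some non-faulty process decides $v\in\{0,1\}$ in round $r$. Then at every non-faulty process: (i) in every round $\rho\ge r$, the flag $\mathit{ptr}[v]$ (eventually) equals $\mathit{true}$, and no non-faulty process decides $\neg v$; (ii) in every round $\rho>r$, the flag $\mathit{ptr}[\neg v]$ is $\mathit{false}$ (never becomes true).
   Context: System model: $n$ asynchronous sequential processes $p_1,\dots,p_n$, of which at most $t$ are Byzantine (behave arbitrarily, may collude); the others are non-faulty. Processes communicate over reliable asynchronous point-to-point channels between every pair: messages between non-faulty processes are eventually delivered, unaltered, not duplicated, and the receiver knows the identity of the sender; there is no bound on delays and the adversary controls delivery order. "Broadcast $m$" means sending $m$ to every process (including oneself). When counting messages "received from $k$ distinct processes", at most one message per sender is counted. S-Broadcast with tag $T$, value $v$ and Boolean $\mathit{sb}_i$ at process $p_i$: set the Boolean flag $\mathit{sval}_i\leftarrow\mathit{false}$; if $\mathit{sb}_i=\mathit{true}$, broadcast $\mathrm{SVAL}(T,v)$; return a reference to $\mathit{sval}_i$ (which may later become true). In the background (only for messages carrying this same value $v$): when $\mathrm{SVAL}(T,v)$ has been received from $t+1$ distinct processes and $p_i$ has not yet broadcast $\mathrm{SVAL}(T,v)$, $p_i$ broadcasts $\mathrm{SVAL}(T,v)$; when $\mathrm{SVAL}(T,v)$ has been received from $2t+1$ distinct processes, $p_i$ sets $\mathit{sval}_i\leftarrow\mathit{true}$. Instances with different (tag, value) pairs are independent. Strong $(t+1)$ common coin: for each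 round $r$, a call $\mathsf{random}()$ in round $r$ returns the same uniformly random bit to every non-faulty caller; this bit is unpredictable and is not revealed to anyone before at least $t+1$ non-faulty processes have called $\mathsf{random}()$ in round $r$. Algorithm A2 (binary consensus), at non-faulty $p_i$ proposing $v_i\in\{0,1\}$, with a two-entry array $\mathit{ptr}[0],\mathit{ptr}[1]$ of references to Boolean flags: set $s\leftarrow\neg v_i$, $r\leftarrow0$, $\mathit{support}\leftarrow\mathit{false}$; $\mathit{ptr}[s]\leftarrow$ S-Broadcast with tag $\mathrm{EST}[1]$, value $s$, Boolean $\mathit{false}$. Repeat forever: (1) $r\leftarrow r+1$. (2) $\mathit{ptr}[\neg s]\leftarrow$ S-Broadcast with tag $\mathrm{EST}[r]$, value $\neg s$, Boolean $\neg\mathit{support}$ (the entry $\mathit{ptr}[s]$ is left unchanged, still referring to an earlier instance). (3) Wait until $\mathit{ptr}[0]=\mathit{true}$ or $\mathit{ptr}[1]=\mathit{true}$. (4) If $\mathit{support}=\mathit{true}$ then $w\leftarrow s$; else if $\mathit{ptr}[0]=\mathit{true}$ then $w\leftarrow0$; else ($\mathit{ptr}[1]=\mathit{true}$) $w\leftarrow1$. (5) Broadcast $\mathrm{AUX}(r,w)$. (6) Wait until there are $n-t$ distinct processes $p_j$ from which a message $\mathrm{AUX}(r,w_j)$ has been received with $\mathit{ptr}[w_j]=\mathit{true}$; let $\mathit{view}$ be the set of these values $w_j$. (7) $s\leftarrow\mathsf{random}()$. (8) If $\mathit{view}=\{s\}$: $\mathit{support}\leftarrow\mathit{true}$ and decide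 $s$ if not yet decided; else if $\mathit{view}=\{0,1\}$: $\mathit{support}\leftarrow\mathit{true}$; else $\mathit{support}\leftarrow\mathit{false}$. ($\neg$ denotes bit negation.) *)

theory Defs
  imports Main
begin

text \<open>Processes are 0..n-1; F is the set of Byzantine processes.
  Binary values are booleans (False = 0, True = 1).
  The tag EST[T] is represented by the round number T.\<close>

datatype msg = SVAL nat bool | AUX nat bool

text \<open>At3: waiting at step (3) of the current round;
  At6: waiting at step (6) of the current round (AUX already broadcast).\<close>
datatype pcl = At3 | At6

text \<open>Local state of a non-faulty process.  ptr x = T means that the
  reference ptr[x] points to the S-Broadcast instance with tag EST[T] and value x.
  dec = Some (v, r) means: decided v in round r.  inv = S-Broadcast instances
  invoked so far, svsent = instances for which SVAL has been broadcast,
  rcv = set of (sender, message) pairs received.\<close>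
record lstate =
  rnd :: nat
  est :: bool
  supp :: bool
  ptr :: "bool \<Rightarrow> nat"
  pc :: pcl
  dec :: "(bool \<times> nat) option"
  inv :: "(nat \<times> bool) set"
  svsent :: "(nat \<times> bool) set"
  rcv :: "(nat \<times> msg) set"

text \<open>Global state: local states and the set of all (sender, receiver, message)
  triples sent so far.\<close>
record gstate =
  loc :: "nat \<Rightarrow> lstate"
  net :: "(nat \<times> nat \<times> msg) set"

definition bcast :: "nat \<Rightarrow> nat \<Rightarrow> msg \<Rightarrow> (nat \<times> nat \<times> msg) set" where
  "bcast n i m = {(i, k, m) | k. k < n}"

definition cnt :: "nat \<Rightarrow> lstate \<Rightarrow> nat \<Rightarrow> bool \<Rightarrow> nat" where
  "cnt n l T x = card {q. q < n \<and> (q, SVAL T x) \<in> rcv l}"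

text \<open>Value of the Boolean flag of the S-Broadcast instance (EST[T], x).\<close>
definition sval :: "nat \<Rightarrow> nat \<Rightarrow> lstate \<Rightarrow> nat \<Rightarrow> bool \<Rightarrow> bool" where
  "sval n t l T x = (2 * t + 1 \<le> cnt n l T x)"

definition flag :: "nat \<Rightarrow> nat \<Rightarrow> lstate \<Rightarrow> bool \<Rightarrow> bool" where
  "flag n t l x = sval n t l (ptr l x) x"

text \<open>Background task of S-Broadcast: relay SVAL(T,x) once received from t+1
  distinct processes (only for invoked instances, at most once).\<close>
definition relay_set :: "nat \<Rightarrow> nat \<Rightarrow> lstate \<Rightarrow> (nat \<times> bool) set" where
  "relay_set n t l = {(T, x). (T, x) \<in> inv l \<and> t + 1 \<le> cnt n l T x \<and> (T, x) \<notin> svsent l}"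

definition relay :: "nat \<Rightarrow> nat \<Rightarrow> nat \<Rightarrow> gstate \<Rightarrow> gstate" where
  "relay n t i g =
     (let l = loc g i; R = relay_set n t l in
      g\<lparr>loc := (loc g)(i := l\<lparr>svsent := svsent l \<union> R\<rparr>),
        net := net g \<union> (\<Union>(T, x)\<in>R. bcast n i (SVAL T x))\<rparr>)"

text \<open>Invocation of S-Broadcast with tag EST[T], value x and Boolean b by process i.
  (The returned reference is stored in ptr by the caller.)\<close>
definition sbcast :: "nat \<Rightarrow> nat \<Rightarrow> nat \<Rightarrow> nat \<Rightarrow> bool \<Rightarrow> bool \<Rightarrow> gstate \<Rightarrow> gstate" where
  "sbcast n t i T x b g = relay n t i
     (let l = loc g i in
      g\<lparr>loc := (loc g)(i := l\<lparr>inv := insert (T, x) (inv l),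
                               svsent := (if b then insert (T, x) (svsent l) else svsent l)\<rparr>),
        net := (if b then net g \<union> bcast n i (SVAL T x) else net g)\<rparr>)"

text \<open>Initial state: every non-faulty process has executed the initialisation and
  steps (1)-(2) of round 1.\<close>
definition init_state :: "nat \<Rightarrow> nat set \<Rightarrow> (nat \<Rightarrow> bool) \<Rightarrow> gstate \<Rightarrow> bool" where
  "init_state n F props g =
     ((\<forall>i. i < n \<and> i \<notin> F \<longrightarrow>
         loc g i = \<lparr>rnd = 1, est = \<not> props i, supp = False, ptr = (\<lambda>_. 1), pc = At3,
                    dec = None, inv = {(1, \<not> props i), (1, props i)},
                    svsent = {(1, props i)}, rcv = {}\<rparr>)
      \<and> net g = (\<Union>i\<in>{i. i < n \<and> i \<notin> F}. bcast n i (SVAL 1 (props i))))"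

text \<open>Steps (3)-(5).\<close>
definition step3 :: "nat \<Rightarrow> nat \<Rightarrow> nat \<Rightarrow> gstate \<Rightarrow> gstate \<Rightarrow> bool" where
  "step3 n t i g g' =
     (let l = loc g i in
      pc l = At3 \<and> (flag n t l False \<or> flag n t l True) \<and>
      (let w = (if supp l then est l else if flag n t l False then False else True) in
       g' = g\<lparr>loc := (loc g)(i := l\<lparr>pc := At6\<rparr>),
              net := net g \<union> bcast n i (AUX (rnd l) w)\<rparr>))"

text \<open>Wait condition of step (6) for a choice of n-t distinct senders S with values ws.\<close>
definition view_ok :: "nat \<Rightarrow> nat \<Rightarrow> lstate \<Rightarrow> nat set \<Rightarrow> (nat \<Rightarrow> bool) \<Rightarrow> bool" where
  "view_ok n t l S ws =
     (S \<subseteq> {..<n} \<and> card S = n - t \<and>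
      (\<forall>j\<in>S. (j, AUX (rnd l) (ws j)) \<in> rcv l \<and> flag n t l (ws j)))"

text \<open>Steps (6)-(8) of round r followed by steps (1)-(2) of round r+1.\<close>
definition step6 :: "nat \<Rightarrow> nat \<Rightarrow> (nat \<Rightarrow> bool) \<Rightarrow> nat \<Rightarrow> gstate \<Rightarrow> gstate \<Rightarrow> bool" where
  "step6 n t coin i g g' =
     (let l = loc g i in
      pc l = At6 \<and>
      (\<exists>S ws. view_ok n t l S ws \<and>
        (let view = ws ` S; s = coin (rnd l);
             sp = (view = {s} \<or> view = {False, True});
             d = (if view = {s} \<and> dec l = None then Some (s, rnd l) else dec l);
             r' = Suc (rnd l);
             l1 = l\<lparr>rnd := r', est := s, supp := sp, dec := d, pc := At3,
                    ptr := (ptr l)(\<not> s := r')\<rparr>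
         in g' = sbcast n t i r' (\<not> s) (\<not> sp) (g\<lparr>loc := (loc g)(i := l1)\<rparr>))))"

definition enabled :: "nat \<Rightarrow> nat \<Rightarrow> nat \<Rightarrow> gstate \<Rightarrow> bool" where
  "enabled n t i g =
     (let l = loc g i in
      (pc l = At3 \<and> (flag n t l False \<or> flag n t l True)) \<or>
      (pc l = At6 \<and> (\<exists>S ws. view_ok n t l S ws)))"

text \<open>Delivery of a message (j -> i, m) to a non-faulty process i, followed
  atomically by the background S-Broadcast reactions.\<close>
definition deliver :: "nat \<Rightarrow> nat \<Rightarrow> nat set \<Rightarrow> gstate \<Rightarrow> gstate \<Rightarrow> bool" where
  "deliver n t F g g' =
     (\<exists>j i m. i < n \<and> i \<notin> F \<and> (j, i, m) \<in> net g \<and> (j, m) \<notin> rcv (loc g i) \<and>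
        g' = relay n t i (g\<lparr>loc := (loc g)(i := (loc g i)\<lparr>rcv := insert (j, m) (rcv (loc g i))\<rparr>)\<rparr>))"

definition byz :: "nat \<Rightarrow> nat set \<Rightarrow> gstate \<Rightarrow> gstate \<Rightarrow> bool" where
  "byz n F g g' = (\<exists>j k m. j \<in> F \<and> k < n \<and> g' = g\<lparr>net := insert (j, k, m) (net g)\<rparr>)"

definition step :: "nat \<Rightarrow> nat \<Rightarrow> nat set \<Rightarrow> (nat \<Rightarrow> bool) \<Rightarrow> gstate \<Rightarrow> gstate \<Rightarrow> bool" where
  "step n t F coin g g' =
     ((\<exists>i. i < n \<and> i \<notin> F \<and> (step3 n t i g g' \<or> step6 n t coin i g g'))
      \<or> deliver n t F g g' \<or> byz n F g g' \<or> g' = g)"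

text \<open>A (fair, infinite) execution: coin r is the common coin bit of round r.\<close>
definition execution :: "nat \<Rightarrow> nat \<Rightarrow> nat set \<Rightarrow> (nat \<Rightarrow> bool) \<Rightarrow> (nat \<Rightarrow> bool)
                          \<Rightarrow> (nat \<Rightarrow> gstate) \<Rightarrow> bool" where
  "execution n t F props coin ex =
     (init_state n F props (ex 0) \<and>
      (\<forall>k. step n t F coin (ex k) (ex (Suc k))) \<and>
      (\<forall>j i m k. j < n \<and> j \<notin> F \<and> i < n \<and> i \<notin> F \<and> (j, i, m) \<in> net (ex k) \<longrightarrow>
          (\<exists>k'. (j, m) \<in> rcv (loc (ex k') i))) \<and>
      (\<forall>i k. i < n \<and> i \<notin> F \<and> (\<forall>k'\<ge>k. enabled n t i (ex k')) \<longrightarrow>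
          (\<exists>k'\<ge>k. step3 n t i (ex k') (ex (Suc k')) \<or> step6 n t coin i (ex k') (ex (Suc k')))))"

end

theory Submission
  imports Defs
begin


fun Pp :: "(nat \<Rightarrow> bool) \<Rightarrow> nat \<Rightarrow> bool \<Rightarrow> nat" where
  "Pp coin 0 x = 1"
| "Pp coin (Suc r) x = (if r = 0 then 1 else if x = (\<not> coin r) then Suc r else Pp coin r x)"

lemma cnt_mono: "rcv l \<subseteq> rcv l' \<Longrightarrow> cnt n l T x \<le> cnt n l' T x"
  unfolding cnt_def by (rule card_mono) auto

lemma sval_mono: "rcv l \<subseteq> rcv l' \<Longrightarrow> sval n t l T x \<Longrightarrow> sval n t l' T x"
  unfolding sval_def using cnt_mono by (meson le_trans)

definition LIl :: "nat \<Rightarrow> nat \<Rightarrow> (nat \<Rightarrow> bool) \<Rightarrow> (nat \<Rightarrow> bool) \<Rightarrow> nat \<Rightarrow> lstate \<Rightarrow> (nat \<times> nat \<times> msg) set \<Rightarrow> bool" where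
 "LIl n t props coin i l N \<longleftrightarrow>
   1 \<le> rnd l \<and> ptr l = Pp coin (rnd l) \<and>
   (\<forall>r x. 1 \<le> r \<and> r \<le> rnd l \<longrightarrow> (Pp coin r x, x) \<in> inv l) \<and>
   (\<forall>T x. (T,x) \<in> inv l \<and> t+1 \<le> cnt n l T x \<longrightarrow> (T,x) \<in> svsent l) \<and>
   (\<forall>T x. (T,x) \<in> svsent l \<longrightarrow> bcast n i (SVAL T x) \<subseteq> N) \<and>
   (\<forall>k T x. (i,k,SVAL T x) \<in> N \<longrightarrow> (T,x) \<in> svsent l) \<and>
   (\<forall>q m. (q,m) \<in> rcv l \<longrightarrow> (q,i,m) \<in> N) \<and>
   (\<forall>k r w. (i,k,AUX r w) \<in> N \<longrightarrow> (r < rnd l \<or> (r = rnd l \<and> pc l = At6)) \<and> sval n t l (Pp coin r w) w) \<and>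
   (\<forall>k k' r w w'. (i,k,AUX r w) \<in> N \<and> (i,k',AUX r w') \<in> N \<longrightarrow> w = w') \<and>
   (\<forall>r. 1 \<le> r \<and> (r < rnd l \<or> (r = rnd l \<and> pc l = At6)) \<longrightarrow> (\<exists>w. bcast n i (AUX r w) \<subseteq> N)) \<and>
   (supp l \<longrightarrow> sval n t l (Pp coin (rnd l) (est l)) (est l)) \<and>
   (1, props i) \<in> svsent l \<and>
   (\<forall>r. 2 \<le> r \<and> r \<le> rnd l \<longrightarrow> (r, \<not>coin(r-1)) \<in> svsent l \<or> sval n t l (Pp coin r (coin(r-1))) (coin(r-1)))"

lemma LIl_frame:
  assumes "LIl n t props coin i l N" "N \<subseteq> N'" "\<And>k m. (i,k,m) \<in> N' \<Longrightarrow> (i,k,m) \<in> N"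
  shows "LIl n t props coin i l N'"
proof -
  have e: "(i,k,m) \<in> N' \<longleftrightarrow> (i,k,m) \<in> N" for k m using assms(2,3) by blast
  have s1: "bcast n i m \<subseteq> N'" if "bcast n i m \<subseteq> N" for m using that assms(2) by blast
  have s2: "(q,i,m) \<in> N'" if "(q,i,m) \<in> N" for q m using that assms(2) by blast
  show ?thesis using assms(1) unfolding LIl_def e
    by (simp add: s1 s2) (metis s1)
qed

lemma relay_loc: "loc (relay n t i g) = (loc g)(i := (loc g i)\<lparr>svsent := svsent (loc g i) \<union> relay_set n t (loc g i)\<rparr>)"
  by (simp add: relay_def Let_def)

lemma relay_net: "net (relay n t i g) = net g \<union> (\<Union>(T, x)\<in>relay_set n t (loc g i). bcast n i (SVAL T x))"
  by (simp add: relay_def Let_def)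

lemma bcast_mem: "(a,k,m) \<in> bcast n i m' \<longleftrightarrow> a = i \<and> k < n \<and> m = m'"
  by (auto simp: bcast_def)

lemma cnt_upd[simp]:
  "cnt n (l\<lparr>svsent := X\<rparr>) = cnt n l" "cnt n (l\<lparr>inv := X\<rparr>) = cnt n l"
  "cnt n (l\<lparr>pc := p\<rparr>) = cnt n l"
  by (simp_all add: fun_eq_iff cnt_def)

lemma sval_upd[simp]:
  "sval n t (l\<lparr>svsent := X\<rparr>) = sval n t l" "sval n t (l\<lparr>inv := X\<rparr>) = sval n t l"
  "sval n t (l\<lparr>pc := p\<rparr>) = sval n t l"
  by (simp_all add: fun_eq_iff sval_def)

lemma LIl_I:
  assumes "1 \<le> rnd l" "ptr l = Pp coin (rnd l)"
   "\<And>r x. 1 \<le> r \<Longrightarrow> r \<le> rnd l \<Longrightarrow> (Pp coin r x, x) \<in> inv l"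
   "\<And>T x. (T,x) \<in> inv l \<Longrightarrow> t+1 \<le> cnt n l T x \<Longrightarrow> (T,x) \<in> svsent l"
   "\<And>T x. (T,x) \<in> svsent l \<Longrightarrow> bcast n i (SVAL T x) \<subseteq> N"
   "\<And>k T x. (i,k,SVAL T x) \<in> N \<Longrightarrow> (T,x) \<in> svsent l"
   "\<And>q m. (q,m) \<in> rcv l \<Longrightarrow> (q,i,m) \<in> N"
   "\<And>k r w. (i,k,AUX r w) \<in> N \<Longrightarrow> (r < rnd l \<or> (r = rnd l \<and> pc l = At6)) \<and> sval n t l (Pp coin r w) w"
   "\<And>k k' r w w'. (i,k,AUX r w) \<in> N \<Longrightarrow> (i,k',AUX r w') \<in> N \<Longrightarrow> w = w'"
   "\<And>r. 1 \<le> r \<Longrightarrow> (r < rnd l \<or> (r = rnd l \<and> pc l = At6)) \<Longrightarrow> (\<exists>w. bcast n i (AUX r w) \<subseteq> N)"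
   "supp l \<Longrightarrow> sval n t l (Pp coin (rnd l) (est l)) (est l)"
   "(1, props i) \<in> svsent l"
   "\<And>r. 2 \<le> r \<Longrightarrow> r \<le> rnd l \<Longrightarrow> (r, \<not>coin(r-1)) \<in> svsent l \<or> sval n t l (Pp coin r (coin(r-1))) (coin(r-1))"
  shows "LIl n t props coin i l N"
  unfolding LIl_def
  apply (intro conjI allI impI; (elim conjE)?)
  using assms by simp_all

lemma LIl_D:
  assumes "LIl n t props coin i l N"
  shows "1 \<le> rnd l" "ptr l = Pp coin (rnd l)"
   "\<And>r x. 1 \<le> r \<Longrightarrow> r \<le> rnd l \<Longrightarrow> (Pp coin r x, x) \<in> inv l"
   "\<And>T x. (T,x) \<in> inv l \<Longrightarrow> t+1 \<le> cnt n l T x \<Longrightarrow> (T,x) \<in> svsent l"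
   "\<And>T x. (T,x) \<in> svsent l \<Longrightarrow> bcast n i (SVAL T x) \<subseteq> N"
   "\<And>k T x. (i,k,SVAL T x) \<in> N \<Longrightarrow> (T,x) \<in> svsent l"
   "\<And>q m. (q,m) \<in> rcv l \<Longrightarrow> (q,i,m) \<in> N"
   "\<And>k r w. (i,k,AUX r w) \<in> N \<Longrightarrow> (r < rnd l \<or> (r = rnd l \<and> pc l = At6)) \<and> sval n t l (Pp coin r w) w"
   "\<And>k k' r w w'. (i,k,AUX r w) \<in> N \<Longrightarrow> (i,k',AUX r w') \<in> N \<Longrightarrow> w = w'"
   "\<And>r. 1 \<le> r \<Longrightarrow> (r < rnd l \<or> (r = rnd l \<and> pc l = At6)) \<Longrightarrow> (\<exists>w. bcast n i (AUX r w) \<subseteq> N)"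
   "supp l \<Longrightarrow> sval n t l (Pp coin (rnd l) (est l)) (est l)"
   "(1, props i) \<in> svsent l"
   "\<And>r. 2 \<le> r \<Longrightarrow> r \<le> rnd l \<Longrightarrow> (r, \<not>coin(r-1)) \<in> svsent l \<or> sval n t l (Pp coin r (coin(r-1))) (coin(r-1))"
  using assms unfolding LIl_def by simp_all



lemma LI_step3_self:
  assumes L: "LIl n t props coin i l N" and pc: "pc l = At3"
    and fl: "flag n t l False \<or> flag n t l True"
    and w: "w = (if supp l then est l else if flag n t l False then False else True)"
  shows "LIl n t props coin i (l\<lparr>pc := At6\<rparr>) (N \<union> bcast n i (AUX (rnd l) w))"
proof -
  note D = LIl_D[OF L]
  have sw: "sval n t l (Pp coin (rnd l) w) w"
  proof (cases "supp l")
    case True then show ?thesis using D(11) w by simp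
  next
    case False then show ?thesis using fl w D(2) unfolding flag_def by auto
  qed
  have old: "r < rnd l" if "(i,k,AUX r w') \<in> N" for k r w'
    using D(8)[OF that] pc by auto
  show ?thesis
  proof (rule LIl_I, goal_cases)
    case 1 then show ?case using D by simp
  next case 2 then show ?case using D by simp
  next case 3 then show ?case using D by simp
  next case 4 then show ?case using D by simp
  next case (5 T x) then show ?case using D(5)[of T x] by auto
  next case (6 k T x) then show ?case using D(6)[of k T x] by (auto simp: bcast_mem)
  next case (7 q m) then show ?case using D(7)[of q m] by auto
  next case (8 k r w') then show ?case using D(8)[of k r w'] sw by (auto simp: bcast_mem)
  next case (9 k k' r w1 w2) then show ?case using D(9)[of k r w1 k' w2] old by (auto simp: bcast_mem)
  next case (10 r) then show ?case using D(10)[of r] by (cases "r < rnd l") auto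
  next case 11 then show ?case using D by simp
  next case 12 then show ?case using D by simp
  next case (13 r) then show ?case using D(13)[of r] by simp
  qed
qed



lemma cnt_eq: "rcv l = rcv l' \<Longrightarrow> cnt n l = cnt n l'"
  by (simp add: cnt_def fun_eq_iff)
lemma sval_eq: "rcv l = rcv l' \<Longrightarrow> sval n t l = sval n t l'"
  by (simp add: sval_def cnt_def fun_eq_iff)

lemma relay_close:
  "(T,x) \<in> inv l \<Longrightarrow> t+1 \<le> cnt n l T x \<Longrightarrow> (T,x) \<in> svsent l \<union> relay_set n t l"
  by (auto simp: relay_set_def)

lemma LI_deliver_self:
  assumes L: "LIl n t props coin i l N" and jm: "(j,i,m) \<in> N"
    and r1: "rcv lr = insert (j,m) (rcv l)" and r2: "inv lr = inv l" and r3: "svsent lr = svsent l"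
    and r4: "rnd lr = rnd l" and r5: "ptr lr = ptr l" and r6: "pc lr = pc l"
    and r7: "supp lr = supp l" and r8: "est lr = est l"
  shows "LIl n t props coin i (lr\<lparr>svsent := svsent lr \<union> relay_set n t lr\<rparr>)
            (N \<union> (\<Union>(T, x)\<in>relay_set n t lr. bcast n i (SVAL T x)))"
proof -
  note D = LIl_D[OF L]
  have sub: "rcv l \<subseteq> rcv lr" using r1 by auto
  have sv: "sval n t l T x \<Longrightarrow> sval n t lr T x" for T x using sval_mono[OF sub] .
  show ?thesis
  proof (rule LIl_I, goal_cases)
    case 1 then show ?case using D r4 by simp
  next case 2 then show ?case using D r4 r5 by simp
  next case 3 then show ?case using D r4 r2 by simp
  next case (4 T x) then show ?case using relay_close[of T x lr] by simp
  next case (5 T x) then show ?case using D(5)[of T x] r3 by (auto simp: relay_set_def)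
  next case (6 k T x) then show ?case using D(6)[of k T x] r3 by (auto simp: bcast_mem relay_set_def)
  next case (7 q m') then show ?case using D(7)[of q m'] jm r1 by auto
  next case (8 k r w') 
    have "(i,k,AUX r w') \<in> N" using 8 by (auto simp: bcast_mem)
    then show ?case using D(8)[of k r w'] sv[of "Pp coin r w'" w'] r4 r6 by simp
  next case (9 k k' r w1 w2) then show ?case using D(9)[of k r w1 k' w2] by (auto simp: bcast_mem)
  next case (10 r) then show ?case using D(10)[of r] r4 r6 by auto
  next case 11 then show ?case using D(11) sv r7 r8 r4 by simp
  next case 12 then show ?case using D r3 by simp
  next case (13 r)
    have "(r, \<not>coin(r-1)) \<in> svsent l \<or> sval n t l (Pp coin r (coin(r-1))) (coin(r-1))"
      using D(13)[of r] 13 r4 by simp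
    then show ?case
    proof
      assume "(r, \<not>coin(r-1)) \<in> svsent l" then show ?case using r3 by simp
    next
      assume "sval n t l (Pp coin r (coin(r-1))) (coin(r-1))"
      then have "sval n t lr (Pp coin r (coin(r-1))) (coin(r-1))" by (rule sv)
      then show ?case by simp
    qed
  qed
qed



lemma Pp_Suc: "1 \<le> r \<Longrightarrow> Pp coin (Suc r) = (Pp coin r)(\<not> coin r := Suc r)"
  by (auto simp: fun_eq_iff)

lemma view_ok_flag: "view_ok n t l S ws \<Longrightarrow> x \<in> ws ` S \<Longrightarrow> flag n t l x"
  unfolding view_ok_def by auto

lemma LI_step6_self:
  assumes L: "LIl n t props coin i l N" and pc: "pc l = At6" and vo: "view_ok n t l S ws"
    and s: "s = coin (rnd l)" and sp: "sp = (ws ` S = {s} \<or> ws ` S = {False, True})"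
    and f1: "rnd l2 = Suc (rnd l)" and f2: "est l2 = s" and f3: "supp l2 = sp"
    and f4: "ptr l2 = (ptr l)(\<not> s := Suc (rnd l))" and f5: "pc l2 = At3"
    and f6: "inv l2 = insert (Suc (rnd l), \<not> s) (inv l)"
    and f7: "svsent l2 = (if sp then svsent l else insert (Suc (rnd l), \<not> s) (svsent l))"
    and f8: "rcv l2 = rcv l"
    and N2: "N2 = (if sp then N else N \<union> bcast n i (SVAL (Suc (rnd l)) (\<not> s)))"
  shows "LIl n t props coin i (l2\<lparr>svsent := svsent l2 \<union> relay_set n t l2\<rparr>)
            (N2 \<union> (\<Union>(T, x)\<in>relay_set n t l2. bcast n i (SVAL T x)))"
proof -
  note D = LIl_D[OF L]
  have sv: "sval n t l2 = sval n t l" using f8 by (rule sval_eq)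
  have cn: "cnt n l2 = cnt n l" using f8 by (rule cnt_eq)
  have r1: "1 \<le> rnd l" using D(1) .
  have PS: "Pp coin (Suc (rnd l)) = (Pp coin (rnd l))(\<not> s := Suc (rnd l))"
    using Pp_Suc[OF r1] s by simp
  have spS: "sval n t l (Pp coin (rnd l) s) s" if "sp"
  proof -
    have "s \<in> ws ` S" using that sp by auto
    then have "flag n t l s" by (rule view_ok_flag[OF vo])
    then show ?thesis using D(2) by (simp add: flag_def)
  qed
  have NN: "N \<subseteq> N2" using N2 by auto
  have N2i: "(i,k,m) \<in> N2 \<Longrightarrow> (i,k,m) \<in> N \<or> m = SVAL (Suc (rnd l)) (\<not> s) \<and> \<not> sp" for k m
    using N2 by (auto split: if_splits simp: bcast_mem)
  show ?thesis
  proof (rule LIl_I, goal_cases)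
    case 1 then show ?case using f1 by simp
  next case 2 then show ?case using f1 f4 PS D(2) by simp
  next case (3 r x)
    show ?case
    proof (cases "r = Suc (rnd l)")
      case True then show ?thesis using PS f6 f1 D(3)[of "rnd l" x] r1 by auto
    next
      case False then show ?thesis using 3 D(3)[of r x] f1 f6 by auto
    qed
  next case (4 T x) then show ?case using relay_close[of T x l2] by simp
  next case (5 T x)
    then have "(T,x) \<in> svsent l2 \<or> (T,x) \<in> relay_set n t l2" by simp
    then show ?case
    proof
      assume a: "(T,x) \<in> svsent l2"
      show ?case
      proof (cases "(T,x) \<in> svsent l")
        case True then show ?thesis using D(5)[of T x] NN by auto
      next
        case False then show ?thesis using a f7 N2 by (auto split: if_splits)
      qed
    next
      assume "(T,x) \<in> relay_set n t l2" then show ?case by blast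
    qed
  next case (6 k T x)
    then have "(i,k,SVAL T x) \<in> N2 \<or> (T,x) \<in> relay_set n t l2" by (auto simp: bcast_mem)
    then show ?case
    proof
      assume "(i,k,SVAL T x) \<in> N2"
      then have "(i,k,SVAL T x) \<in> N \<or> (T = Suc (rnd l) \<and> x = (\<not> s) \<and> \<not> sp)" using N2i by blast
      then show ?case using D(6)[of k T x] f7 by auto
    qed simp
  next case (7 q m') then show ?case using D(7)[of q m'] f8 NN by auto
  next case (8 k r w') 
    have "(i,k,AUX r w') \<in> N" using 8 N2i by (auto simp: bcast_mem)
    then show ?case using D(8)[of k r w'] sv f1 by auto
  next case (9 k k' r w1 w2) 
    have "(i,k,AUX r w1) \<in> N" "(i,k',AUX r w2) \<in> N" using 9 N2i by (auto simp: bcast_mem)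
    then show ?case using D(9) by blast
  next case (10 r) 
    then have "r < rnd l \<or> r = rnd l \<and> pc l = At6" using f1 f5 pc by auto
    then show ?case using D(10)[of r] 10 NN by blast
  next case 11 then show ?case using spS f3 f2 f1 sv PS by auto
  next case 12 then show ?case using D(12) f7 by auto
  next case (13 r)
    show ?case
    proof (cases "r = Suc (rnd l)")
      case True then show ?thesis using spS f7 f1 sv PS s by auto
    next
      case False 
      then have "(r, \<not>coin(r-1)) \<in> svsent l \<or> sval n t l (Pp coin r (coin(r-1))) (coin(r-1))"
        using D(13)[of r] 13 f1 by simp
      then show ?thesis using f7 sv by auto
    qed
  qed
qed



definition Inv :: "nat \<Rightarrow> nat \<Rightarrow> nat set \<Rightarrow> (nat \<Rightarrow> bool) \<Rightarrow> (nat \<Rightarrow> bool) \<Rightarrow> gstate \<Rightarrow> bool" where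
  "Inv n t F props coin g \<longleftrightarrow> (\<forall>i. i < n \<and> i \<notin> F \<longrightarrow> LIl n t props coin i (loc g i) (net g))"

lemma sbcast_loc: "loc (sbcast n t i T x b g) = (let l = loc g i; l2 = l\<lparr>inv := insert (T, x) (inv l),
                               svsent := (if b then insert (T, x) (svsent l) else svsent l)\<rparr> in
     (loc g)(i := l2\<lparr>svsent := svsent l2 \<union> relay_set n t l2\<rparr>))"
  by (simp add: sbcast_def relay_def Let_def)

lemma sbcast_net: "net (sbcast n t i T x b g) = (let l = loc g i; l2 = l\<lparr>inv := insert (T, x) (inv l),
                               svsent := (if b then insert (T, x) (svsent l) else svsent l)\<rparr> in
     (if b then net g \<union> bcast n i (SVAL T x) else net g) \<union> (\<Union>(T, x)\<in>relay_set n t l2. bcast n i (SVAL T x)))"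
  by (simp add: sbcast_def relay_def Let_def)

lemma frame_other:
  assumes "LIl n t props coin i l N" "N \<subseteq> N'" "\<And>k m. (i,k,m) \<in> N' \<Longrightarrow> (i,k,m) \<in> N"
  shows "LIl n t props coin i l N'"
  using LIl_frame[OF assms] .

lemma Inv_init: "init_state n F props g \<Longrightarrow> Inv n t F props coin g"
  unfolding Inv_def
proof (intro allI impI)
  fix i assume I: "init_state n F props g" and i: "i < n \<and> i \<notin> F"
  have l: "loc g i = \<lparr>rnd = 1, est = \<not> props i, supp = False, ptr = (\<lambda>_. 1), pc = At3,
                    dec = None, inv = {(1, \<not> props i), (1, props i)},
                    svsent = {(1, props i)}, rcv = {}\<rparr>" using I i unfolding init_state_def by blast
  have N: "net g = (\<Union>i\<in>{i. i < n \<and> i \<notin> F}. bcast n i (SVAL 1 (props i)))" using I unfolding init_state_def by blast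
  have cnt0: "cnt n (loc g i) T x = 0" for T x using l by (simp add: cnt_def)
  show "LIl n t props coin i (loc g i) (net g)"
  proof (rule LIl_I, goal_cases)
    case 1 then show ?case using l by simp
  next case 2 then show ?case using l by (simp add: fun_eq_iff)
  next case (3 r x) then show ?case using l by (cases x) auto
  next case (4 T x) then show ?case using cnt0 by simp
  next case (5 T x) then show ?case using l N i by auto
  next case (6 k T x) then show ?case using l N by (auto simp: bcast_mem)
  next case (7 q m) then show ?case using l by simp
  next case (8 k r w) then show ?case using N by (auto simp: bcast_mem)
  next case (9 k k' r w w') then show ?case using N by (auto simp: bcast_mem)
  next case (10 r) then show ?case using l by simp
  next case 11 then show ?case using l by simp
  next case 12 then show ?case using l by simp
  next case (13 r) then show ?case using l by simp
  qed
qed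

lemma Inv_step3:
  assumes I: "Inv n t F props coin g" and a: "a < n" "a \<notin> F" and st: "step3 n t a g g'"
  shows "Inv n t F props coin g'"
proof -
  let ?l = "loc g a"
  define w where "w = (if supp ?l then est ?l else if flag n t ?l False then False else True)"
  have pc: "pc ?l = At3" and fl: "flag n t ?l False \<or> flag n t ?l True"
    and g': "g' = g\<lparr>loc := (loc g)(a := ?l\<lparr>pc := At6\<rparr>), net := net g \<union> bcast n a (AUX (rnd ?l) w)\<rparr>"
    using st unfolding step3_def w_def Let_def by auto
  show ?thesis unfolding Inv_def
  proof (intro allI impI)
    fix i assume i: "i < n \<and> i \<notin> F"
    have Li: "LIl n t props coin i (loc g i) (net g)" using I i unfolding Inv_def by blast
    show "LIl n t props coin i (loc g' i) (net g')"
    proof (cases "i = a")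
      case True then show ?thesis using LI_step3_self[OF _ pc fl w_def] Li g' by simp
    next
      case False 
      then show ?thesis using g' by (auto intro!: frame_other[OF Li] simp: bcast_mem)
    qed
  qed
qed

lemma Inv_deliver:
  assumes I: "Inv n t F props coin g" and st: "deliver n t F g g'"
  shows "Inv n t F props coin g'"
proof -
  obtain j a m where a: "a < n" "a \<notin> F" and jm: "(j, a, m) \<in> net g"
    and g': "g' = relay n t a (g\<lparr>loc := (loc g)(a := (loc g a)\<lparr>rcv := insert (j, m) (rcv (loc g a))\<rparr>)\<rparr>)"
    using st unfolding deliver_def by blast
  define lr where "lr = (loc g a)\<lparr>rcv := insert (j, m) (rcv (loc g a))\<rparr>"
  have la: "loc g' = (loc g)(a := lr\<lparr>svsent := svsent lr \<union> relay_set n t lr\<rparr>)"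
    using g' lr_def by (simp add: relay_loc)
  have na: "net g' = net g \<union> (\<Union>(T, x)\<in>relay_set n t lr. bcast n a (SVAL T x))"
    using g' lr_def by (simp add: relay_net)
  show ?thesis unfolding Inv_def
  proof (intro allI impI)
    fix i assume i: "i < n \<and> i \<notin> F"
    have Li: "LIl n t props coin i (loc g i) (net g)" using I i unfolding Inv_def by blast
    show "LIl n t props coin i (loc g' i) (net g')"
    proof (cases "i = a")
      case True 
      have "LIl n t props coin a (lr\<lparr>svsent := svsent lr \<union> relay_set n t lr\<rparr>)
            (net g \<union> (\<Union>(T, x)\<in>relay_set n t lr. bcast n a (SVAL T x)))"
        using Li True by (intro LI_deliver_self[OF _ jm]) (simp_all add: lr_def)
      then show ?thesis using la na True by simp
    next
      case False 
      then show ?thesis using la na by (auto intro!: frame_other[OF Li] simp: bcast_mem)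
    qed
  qed
qed

lemma Inv_byz:
  assumes I: "Inv n t F props coin g" and st: "byz n F g g'"
  shows "Inv n t F props coin g'"
proof -
  obtain j k m where j: "j \<in> F" and g': "g' = g\<lparr>net := insert (j, k, m) (net g)\<rparr>"
    using st unfolding byz_def by blast
  show ?thesis unfolding Inv_def
  proof (intro allI impI)
    fix i assume i: "i < n \<and> i \<notin> F"
    have Li: "LIl n t props coin i (loc g i) (net g)" using I i unfolding Inv_def by blast
    show "LIl n t props coin i (loc g' i) (net g')"
      using g' i j by (auto intro!: frame_other[OF Li])
  qed
qed



lemma step6_E:
  assumes "step6 n t coin a g g'"
  obtains S ws where "pc (loc g a) = At6" "view_ok n t (loc g a) S ws"
    "g' = sbcast n t a (Suc (rnd (loc g a))) (\<not> coin (rnd (loc g a)))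
           (\<not> (ws ` S = {coin (rnd (loc g a))} \<or> ws ` S = {False, True}))
           (g\<lparr>loc := (loc g)(a := (loc g a)\<lparr>rnd := Suc (rnd (loc g a)), est := coin (rnd (loc g a)),
                supp := (ws ` S = {coin (rnd (loc g a))} \<or> ws ` S = {False, True}),
                dec := (if ws ` S = {coin (rnd (loc g a))} \<and> dec (loc g a) = None 
                        then Some (coin (rnd (loc g a)), rnd (loc g a)) else dec (loc g a)),
                pc := At3,
                ptr := (ptr (loc g a))(\<not> coin (rnd (loc g a)) := Suc (rnd (loc g a)))\<rparr>)\<rparr>)"
  using assms unfolding step6_def Let_def by blast

lemma Inv_step6:
  assumes I: "Inv n t F props coin g" and a: "a < n" "a \<notin> F" and st: "step6 n t coin a g g'"
  shows "Inv n t F props coin g'"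
proof -
  let ?l = "loc g a"
  obtain S ws where pc: "pc ?l = At6" and vo: "view_ok n t ?l S ws" and
    g': "g' = sbcast n t a (Suc (rnd ?l)) (\<not> coin (rnd ?l))
           (\<not> (ws ` S = {coin (rnd ?l)} \<or> ws ` S = {False, True}))
           (g\<lparr>loc := (loc g)(a := ?l\<lparr>rnd := Suc (rnd ?l), est := coin (rnd ?l),
                supp := (ws ` S = {coin (rnd ?l)} \<or> ws ` S = {False, True}),
                dec := (if ws ` S = {coin (rnd ?l)} \<and> dec ?l = None 
                        then Some (coin (rnd ?l), rnd ?l) else dec ?l),
                pc := At3,
                ptr := (ptr ?l)(\<not> coin (rnd ?l) := Suc (rnd ?l))\<rparr>)\<rparr>)"
    using step6_E[OF st] by metis
  define s where "s = coin (rnd ?l)"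
  define sp where "sp = (ws ` S = {s} \<or> ws ` S = {False, True})"
  define l1 where "l1 = ?l\<lparr>rnd := Suc (rnd ?l), est := s, supp := sp,
                dec := (if ws ` S = {s} \<and> dec ?l = None then Some (s, rnd ?l) else dec ?l),
                pc := At3, ptr := (ptr ?l)(\<not> s := Suc (rnd ?l))\<rparr>"
  define l2 where "l2 = l1\<lparr>inv := insert (Suc (rnd ?l), \<not> s) (inv l1),
                               svsent := (if \<not> sp then insert (Suc (rnd ?l), \<not> s) (svsent l1) else svsent l1)\<rparr>"
  have g'': "g' = sbcast n t a (Suc (rnd ?l)) (\<not> s) (\<not> sp) (g\<lparr>loc := (loc g)(a := l1)\<rparr>)"
    using g' unfolding s_def sp_def l1_def by simp
  have la: "loc g' = (loc g)(a := l2\<lparr>svsent := svsent l2 \<union> relay_set n t l2\<rparr>)"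
    unfolding g'' sbcast_loc l2_def by (simp add: Let_def)
  define N2 where "N2 = (if sp then net g else net g \<union> bcast n a (SVAL (Suc (rnd ?l)) (\<not> s)))"
  have na: "net g' = N2 \<union> (\<Union>(T, x)\<in>relay_set n t l2. bcast n a (SVAL T x))"
    unfolding g'' sbcast_net l2_def N2_def by (simp add: Let_def)
  show ?thesis unfolding Inv_def
  proof (intro allI impI)
    fix i assume i: "i < n \<and> i \<notin> F"
    have Li: "LIl n t props coin i (loc g i) (net g)" using I i unfolding Inv_def by blast
    show "LIl n t props coin i (loc g' i) (net g')"
    proof (cases "i = a")
      case True 
      have "LIl n t props coin a (l2\<lparr>svsent := svsent l2 \<union> relay_set n t l2\<rparr>)
            (N2 \<union> (\<Union>(T, x)\<in>relay_set n t l2. bcast n a (SVAL T x)))"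
        using Li True pc vo 
        by (intro LI_step6_self[where ?l2.0 = l2 and ?N2.0 = N2 and S = S and ws = ws and s = s and sp = sp
            and l = "loc g a" and N = "net g" and i = a])
           (simp_all add: l2_def l1_def s_def sp_def N2_def)
      then show ?thesis using la na True by simp
    next
      case False 
      then show ?thesis using la na N2_def by (auto intro!: frame_other[OF Li] simp: bcast_mem)
    qed
  qed
qed

lemma Inv_step:
  assumes I: "Inv n t F props coin g" and st: "step n t F coin g g'"
  shows "Inv n t F props coin g'"
  using st unfolding step_def
  using Inv_step3[OF I] Inv_step6[OF I] Inv_deliver[OF I] Inv_byz[OF I] I by blast

lemma Inv_exec:
  assumes "execution n t F props coin ex"
  shows "Inv n t F props coin (ex k)"
proof (induction k)
  case 0 then show ?case using assms Inv_init unfolding execution_def by blast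
next
  case (Suc k) then show ?case using assms Inv_step unfolding execution_def by blast
qed



lemma step6_loc:
  assumes st: "step6 n t coin a g g'"
  obtains S ws l' R where "pc (loc g a) = At6" "view_ok n t (loc g a) S ws" "loc g' = (loc g)(a := l')"
    "rnd l' = Suc (rnd (loc g a))" "rcv l' = rcv (loc g a)" "inv (loc g a) \<subseteq> inv l'"
    "svsent (loc g a) \<subseteq> svsent l'" "pc l' = At3"
    "supp l' = (ws ` S = {coin (rnd (loc g a))} \<or> ws ` S = {False, True})"
    "dec l' = (if ws ` S = {coin (rnd (loc g a))} \<and> dec (loc g a) = None 
                        then Some (coin (rnd (loc g a)), rnd (loc g a)) else dec (loc g a))"
    "R \<subseteq> {(T,x). t+1 \<le> cnt n l' T x}"
    "net g' = (if (ws ` S = {coin (rnd (loc g a))} \<or> ws ` S = {False, True}) then net g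
               else net g \<union> bcast n a (SVAL (Suc (rnd (loc g a))) (\<not> coin (rnd (loc g a)))))
         \<union> (\<Union>(T, x)\<in>R. bcast n a (SVAL T x))"
proof -
  let ?l = "loc g a"
  obtain S ws where pc: "pc ?l = At6" and vo: "view_ok n t ?l S ws" and
    g': "g' = sbcast n t a (Suc (rnd ?l)) (\<not> coin (rnd ?l))
           (\<not> (ws ` S = {coin (rnd ?l)} \<or> ws ` S = {False, True}))
           (g\<lparr>loc := (loc g)(a := ?l\<lparr>rnd := Suc (rnd ?l), est := coin (rnd ?l),
                supp := (ws ` S = {coin (rnd ?l)} \<or> ws ` S = {False, True}),
                dec := (if ws ` S = {coin (rnd ?l)} \<and> dec ?l = None 
                        then Some (coin (rnd ?l), rnd ?l) else dec ?l),
                pc := At3,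
                ptr := (ptr ?l)(\<not> coin (rnd ?l) := Suc (rnd ?l))\<rparr>)\<rparr>)"
    using step6_E[OF st] by metis
  define s where "s = coin (rnd ?l)"
  define sp where "sp = (ws ` S = {s} \<or> ws ` S = {False, True})"
  define l1 where "l1 = ?l\<lparr>rnd := Suc (rnd ?l), est := s, supp := sp,
                dec := (if ws ` S = {s} \<and> dec ?l = None then Some (s, rnd ?l) else dec ?l),
                pc := At3, ptr := (ptr ?l)(\<not> s := Suc (rnd ?l))\<rparr>"
  define l2 where "l2 = l1\<lparr>inv := insert (Suc (rnd ?l), \<not> s) (inv l1),
                               svsent := (if \<not> sp then insert (Suc (rnd ?l), \<not> s) (svsent l1) else svsent l1)\<rparr>"
  have g'': "g' = sbcast n t a (Suc (rnd ?l)) (\<not> s) (\<not> sp) (g\<lparr>loc := (loc g)(a := l1)\<rparr>)"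
    using g' unfolding s_def sp_def l1_def by simp
  have la: "loc g' = (loc g)(a := l2\<lparr>svsent := svsent l2 \<union> relay_set n t l2\<rparr>)"
    unfolding g'' sbcast_loc l2_def by (simp add: Let_def)
  have na: "net g' = (if sp then net g else net g \<union> bcast n a (SVAL (Suc (rnd ?l)) (\<not> s))) \<union> (\<Union>(T, x)\<in>relay_set n t l2. bcast n a (SVAL T x))"
    unfolding g'' sbcast_net l2_def by (simp add: Let_def)
  have rs: "relay_set n t l2 \<subseteq> {(T,x). t+1 \<le> cnt n (l2\<lparr>svsent := svsent l2 \<union> relay_set n t l2\<rparr>) T x}"
    by (auto simp: relay_set_def)
  show ?thesis
    apply (rule that[OF pc vo la _ _ _ _ _ _ _ rs])
    using na unfolding l2_def l1_def s_def sp_def apply (auto)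
    done
qed



lemma step3_loc:
  assumes "step3 n t a g g'"
  obtains w where "pc (loc g a) = At3" "loc g' = (loc g)(a := (loc g a)\<lparr>pc := At6\<rparr>)"
    "net g' = net g \<union> bcast n a (AUX (rnd (loc g a)) w)"
  using assms unfolding step3_def Let_def by auto

lemma deliver_loc:
  assumes "deliver n t F g g'"
  obtains a j m l' R where "a < n" "a \<notin> F" "(j,a,m) \<in> net g" "loc g' = (loc g)(a := l')"
    "rcv l' = insert (j,m) (rcv (loc g a))" "rnd l' = rnd (loc g a)" "pc l' = pc (loc g a)"
    "dec l' = dec (loc g a)" "inv l' = inv (loc g a)" "svsent (loc g a) \<subseteq> svsent l'"
    "R \<subseteq> {(T,x). t+1 \<le> cnt n l' T x}"
    "net g' = net g \<union> (\<Union>(T, x)\<in>R. bcast n a (SVAL T x))"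
proof -
  obtain j a m where a: "a < n" "a \<notin> F" and jm: "(j, a, m) \<in> net g"
    and g': "g' = relay n t a (g\<lparr>loc := (loc g)(a := (loc g a)\<lparr>rcv := insert (j, m) (rcv (loc g a))\<rparr>)\<rparr>)"
    using assms unfolding deliver_def by blast
  define lr where "lr = (loc g a)\<lparr>rcv := insert (j, m) (rcv (loc g a))\<rparr>"
  have la: "loc g' = (loc g)(a := lr\<lparr>svsent := svsent lr \<union> relay_set n t lr\<rparr>)"
    using g' lr_def by (simp add: relay_loc)
  have na: "net g' = net g \<union> (\<Union>(T, x)\<in>relay_set n t lr. bcast n a (SVAL T x))"
    using g' lr_def by (simp add: relay_net)
  have rs: "relay_set n t lr \<subseteq> {(T,x). t+1 \<le> cnt n (lr\<lparr>svsent := svsent lr \<union> relay_set n t lr\<rparr>) T x}"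
    by (auto simp: relay_set_def)
  show ?thesis
    apply (rule that[OF a jm la _ _ _ _ _ _ rs na])
    by (auto simp: lr_def)
qed

lemma step_facts:
  assumes st: "step n t F coin g g'"
  shows "net g \<subseteq> net g'"
    "rcv (loc g j) \<subseteq> rcv (loc g' j)" "svsent (loc g j) \<subseteq> svsent (loc g' j)"
    "inv (loc g j) \<subseteq> inv (loc g' j)"
    "(rnd (loc g' j) = rnd (loc g j) \<and> dec (loc g' j) = dec (loc g j) \<and>
        (pc (loc g j) = At6 \<longrightarrow> pc (loc g' j) = At6)) \<or> step6 n t coin j g g'"
    "(p,m) \<in> rcv (loc g' j) \<Longrightarrow> (p,m) \<in> rcv (loc g j) \<or> (p,j,m) \<in> net g"
    "(q,k,m) \<in> net g' \<Longrightarrow> (q,k,m) \<notin> net g \<Longrightarrow> q \<in> F \<or> (\<exists>w. m = AUX (rnd (loc g q)) w \<and> step3 n t q g g') \<or>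
       (\<exists>T x. m = SVAL T x \<and> (t+1 \<le> cnt n (loc g' q) T x \<or> 
          (step6 n t coin q g g' \<and> T = Suc (rnd (loc g q)) \<and> x = (\<not> coin (rnd (loc g q))) \<and>
           (\<exists>S ws. view_ok n t (loc g q) S ws \<and> \<not> (ws ` S = {coin (rnd (loc g q))} \<or> ws ` S = {False, True})))))"
proof -
  have "(\<exists>a. step3 n t a g g') \<or> (\<exists>a. step6 n t coin a g g') \<or> deliver n t F g g' \<or> byz n F g g' \<or> g' = g"
    using st unfolding step_def by blast
  then have "net g \<subseteq> net g' \<and>
    rcv (loc g j) \<subseteq> rcv (loc g' j) \<and> svsent (loc g j) \<subseteq> svsent (loc g' j) \<and>
    inv (loc g j) \<subseteq> inv (loc g' j) \<and>
    ((rnd (loc g' j) = rnd (loc g j) \<and> dec (loc g' j) = dec (loc g j) \<and>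
        (pc (loc g j) = At6 \<longrightarrow> pc (loc g' j) = At6)) \<or> step6 n t coin j g g') \<and>
    ((p,m) \<in> rcv (loc g' j) \<longrightarrow> (p,m) \<in> rcv (loc g j) \<or> (p,j,m) \<in> net g) \<and>
    ((q,k,m) \<in> net g' \<longrightarrow> (q,k,m) \<notin> net g \<longrightarrow> q \<in> F \<or> (\<exists>w. m = AUX (rnd (loc g q)) w \<and> step3 n t q g g') \<or>
       (\<exists>T x. m = SVAL T x \<and> (t+1 \<le> cnt n (loc g' q) T x \<or> 
          (step6 n t coin q g g' \<and> T = Suc (rnd (loc g q)) \<and> x = (\<not> coin (rnd (loc g q))) \<and>
           (\<exists>S ws. view_ok n t (loc g q) S ws \<and> \<not> (ws ` S = {coin (rnd (loc g q))} \<or> ws ` S = {False, True}))))))"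
  proof (elim disjE exE)
    fix a assume s3: "step3 n t a g g'"
    then obtain w where "pc (loc g a) = At3" "loc g' = (loc g)(a := (loc g a)\<lparr>pc := At6\<rparr>)"
      "net g' = net g \<union> bcast n a (AUX (rnd (loc g a)) w)" by (rule step3_loc)
    then show ?thesis using s3 by (auto simp: bcast_mem)
  next
    fix a assume s6: "step6 n t coin a g g'"
    then obtain S ws l' R where "pc (loc g a) = At6" "view_ok n t (loc g a) S ws" "loc g' = (loc g)(a := l')"
      "rnd l' = Suc (rnd (loc g a))" "rcv l' = rcv (loc g a)" "inv (loc g a) \<subseteq> inv l'"
      "svsent (loc g a) \<subseteq> svsent l'" "pc l' = At3"
      "R \<subseteq> {(T,x). t+1 \<le> cnt n l' T x}"
      "net g' = (if (ws ` S = {coin (rnd (loc g a))} \<or> ws ` S = {False, True}) then net g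
               else net g \<union> bcast n a (SVAL (Suc (rnd (loc g a))) (\<not> coin (rnd (loc g a)))))
         \<union> (\<Union>(T, x)\<in>R. bcast n a (SVAL T x))"
      by (rule step6_loc)
    note F = this
    let ?sp = "ws ` S = {coin (rnd (loc g a))} \<or> ws ` S = {False, True}"
    have A: "net g \<subseteq> net g' \<and>
    rcv (loc g j) \<subseteq> rcv (loc g' j) \<and> svsent (loc g j) \<subseteq> svsent (loc g' j) \<and>
    inv (loc g j) \<subseteq> inv (loc g' j) \<and>
    ((rnd (loc g' j) = rnd (loc g j) \<and> dec (loc g' j) = dec (loc g j) \<and>
        (pc (loc g j) = At6 \<longrightarrow> pc (loc g' j) = At6)) \<or> step6 n t coin j g g') \<and>
    ((p,m) \<in> rcv (loc g' j) \<longrightarrow> (p,m) \<in> rcv (loc g j) \<or> (p,j,m) \<in> net g)"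
      using F s6 by (cases "j = a") (auto split: if_splits)
    have B: "q \<in> F \<or> (\<exists>w. m = AUX (rnd (loc g q)) w \<and> step3 n t q g g') \<or>
       (\<exists>T x. m = SVAL T x \<and> (t+1 \<le> cnt n (loc g' q) T x \<or> 
          (step6 n t coin q g g' \<and> T = Suc (rnd (loc g q)) \<and> x = (\<not> coin (rnd (loc g q))) \<and>
           (\<exists>S ws. view_ok n t (loc g q) S ws \<and> \<not> (ws ` S = {coin (rnd (loc g q))} \<or> ws ` S = {False, True})))))"
      if q1: "(q,k,m) \<in> net g'" and q2: "(q,k,m) \<notin> net g"
    proof -
      have "(q,k,m) \<in> bcast n a (SVAL (Suc (rnd (loc g a))) (\<not> coin (rnd (loc g a)))) \<and> \<not> ?sp
            \<or> (\<exists>T x. (T,x) \<in> R \<and> (q,k,m) \<in> bcast n a (SVAL T x))"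
        using q1 q2 F(10) by (auto split: if_splits)
      then show ?thesis
      proof
        assume h: "(q,k,m) \<in> bcast n a (SVAL (Suc (rnd (loc g a))) (\<not> coin (rnd (loc g a)))) \<and> \<not> ?sp"
        then have "q = a" "m = SVAL (Suc (rnd (loc g a))) (\<not> coin (rnd (loc g a)))" by (auto simp: bcast_mem)
        then show ?thesis using h s6 F(2) by blast
      next
        assume "\<exists>T x. (T,x) \<in> R \<and> (q,k,m) \<in> bcast n a (SVAL T x)"
        then obtain T x where "(T,x) \<in> R" "q = a" "m = SVAL T x" by (auto simp: bcast_mem)
        then show ?thesis using F(3,9) by auto
      qed
    qed
    show ?thesis using A B by blast
  next
    assume d: "deliver n t F g g'"
    then obtain a j' m' l' R where "a < n" "a \<notin> F" "(j',a,m') \<in> net g" "loc g' = (loc g)(a := l')"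
      "rcv l' = insert (j',m') (rcv (loc g a))" "rnd l' = rnd (loc g a)" "pc l' = pc (loc g a)"
      "dec l' = dec (loc g a)" "inv l' = inv (loc g a)" "svsent (loc g a) \<subseteq> svsent l'"
      "R \<subseteq> {(T,x). t+1 \<le> cnt n l' T x}"
      "net g' = net g \<union> (\<Union>(T, x)\<in>R. bcast n a (SVAL T x))"
      by (rule deliver_loc)
    then show ?thesis by (auto simp: bcast_mem)
  next
    assume "byz n F g g'"
    then obtain j' k' m' where "j' \<in> F" "g' = g\<lparr>net := insert (j', k', m') (net g)\<rparr>"
      unfolding byz_def by blast
    then show ?thesis by auto
  next
    assume "g' = g" then show ?thesis by auto
  qed
  then show "net g \<subseteq> net g'"
    "rcv (loc g j) \<subseteq> rcv (loc g' j)" "svsent (loc g j) \<subseteq> svsent (loc g' j)"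
    "inv (loc g j) \<subseteq> inv (loc g' j)"
    "(rnd (loc g' j) = rnd (loc g j) \<and> dec (loc g' j) = dec (loc g j) \<and>
        (pc (loc g j) = At6 \<longrightarrow> pc (loc g' j) = At6)) \<or> step6 n t coin j g g'"
    "(p,m) \<in> rcv (loc g' j) \<Longrightarrow> (p,m) \<in> rcv (loc g j) \<or> (p,j,m) \<in> net g"
    "(q,k,m) \<in> net g' \<Longrightarrow> (q,k,m) \<notin> net g \<Longrightarrow> q \<in> F \<or> (\<exists>w. m = AUX (rnd (loc g q)) w \<and> step3 n t q g g') \<or>
       (\<exists>T x. m = SVAL T x \<and> (t+1 \<le> cnt n (loc g' q) T x \<or> 
          (step6 n t coin q g g' \<and> T = Suc (rnd (loc g q)) \<and> x = (\<not> coin (rnd (loc g q))) \<and>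
           (\<exists>S ws. view_ok n t (loc g q) S ws \<and> \<not> (ws ` S = {coin (rnd (loc g q))} \<or> ws ` S = {False, True})))))"
    by blast+
qed



lemma step6_rnd: "step6 n t coin a g g' \<Longrightarrow> rnd (loc g' a) = Suc (rnd (loc g a))"
  by (erule step6_loc) simp

lemma step6_view: "step6 n t coin a g g' \<Longrightarrow> \<exists>S ws. view_ok n t (loc g a) S ws \<and>
   supp (loc g' a) = (ws ` S = {coin (rnd (loc g a))} \<or> ws ` S = {False, True}) \<and>
   dec (loc g' a) = (if ws ` S = {coin (rnd (loc g a))} \<and> dec (loc g a) = None 
                        then Some (coin (rnd (loc g a)), rnd (loc g a)) else dec (loc g a))"
proof -
  assume "step6 n t coin a g g'"
  then obtain S ws l' where "view_ok n t (loc g a) S ws" "loc g' = (loc g)(a := l')"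
    "supp l' = (ws ` S = {coin (rnd (loc g a))} \<or> ws ` S = {False, True})"
    "dec l' = (if ws ` S = {coin (rnd (loc g a))} \<and> dec (loc g a) = None 
                        then Some (coin (rnd (loc g a)), rnd (loc g a)) else dec (loc g a))"
    by (rule step6_loc) 
  then show ?thesis by (intro exI[of _ S] exI[of _ ws]) simp
qed

lemma step3_pc: "step3 n t a g g' \<Longrightarrow> pc (loc g' a) = At6 \<and> rnd (loc g' a) = rnd (loc g a)"
  by (erule step3_loc) simp

lemma ev_all:
  fixes P :: "'a \<Rightarrow> nat \<Rightarrow> bool"
  assumes "finite A" "\<forall>x\<in>A. \<exists>K. \<forall>k\<ge>K. P x k"
  shows "\<exists>K. \<forall>k\<ge>K. \<forall>x\<in>A. P x k"
  using assms
proof (induction A rule: finite_induct)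
  case empty then show ?case by simp
next
  case (insert a A)
  have h1: "\<forall>x\<in>A. \<exists>K. \<forall>k\<ge>K. P x k" using insert.prems by simp
  obtain K1 where K1: "\<forall>k\<ge>K1. \<forall>x\<in>A. P x k" using insert.IH[OF h1] by blast
  have "\<exists>K. \<forall>k\<ge>K. P a k" using insert.prems by simp
  then obtain K2 where K2: "\<forall>k\<ge>K2. P a k" by blast
  show ?case
  proof (intro exI[of _ "max K1 K2"] allI impI ballI)
    fix k x assume km: "max K1 K2 \<le> k" and x: "x \<in> insert a A"
    have "K1 \<le> k" "K2 \<le> k" using km by auto
    then show "P x k" using K1 K2 x by blast
  qed
qed

locale A2 =
  fixes n t :: nat and F :: "nat set" and props coin :: "nat \<Rightarrow> bool" and ex :: "nat \<Rightarrow> gstate"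
  assumes nt: "3 * t < n" and FS: "F \<subseteq> {..<n}" and cF: "card F \<le> t"
    and exe: "execution n t F props coin ex"
begin

definition NF where "NF = {j. j < n \<and> j \<notin> F}"

lemma finNF: "finite NF" unfolding NF_def by simp
lemma finF: "finite F" using FS finite_subset by blast

lemma cardNF: "n - t \<le> card NF"
proof -
  have "NF = {..<n} - F" unfolding NF_def by auto
  then have "card NF = n - card F" using FS finF by (simp add: card_Diff_subset)
  then show ?thesis using cF by simp
qed

lemma stp: "step n t F coin (ex k) (ex (Suc k))"
  using exe unfolding execution_def by blast

lemma LI: "j \<in> NF \<Longrightarrow> LIl n t props coin j (loc (ex k) j) (net (ex k))"
  using Inv_exec[OF exe, of k] unfolding Inv_def NF_def by blast

lemmas LID = LIl_D[OF LI]

lemma fair_recv: "j \<in> NF \<Longrightarrow> i \<in> NF \<Longrightarrow> (j,i,m) \<in> net (ex k) \<Longrightarrow> \<exists>k'. (j,m) \<in> rcv (loc (ex k') i)"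
  using exe unfolding execution_def NF_def by blast

lemma fair_step: "i \<in> NF \<Longrightarrow> (\<forall>k'\<ge>k. enabled n t i (ex k')) \<Longrightarrow>
   \<exists>k'\<ge>k. step3 n t i (ex k') (ex (Suc k')) \<or> step6 n t coin i (ex k') (ex (Suc k'))"
  using exe unfolding execution_def NF_def by blast

lemma mono_gen:
  assumes "\<And>k. R (f k) (f (Suc k))" "\<And>x. R x x" "\<And>x y z. R x y \<Longrightarrow> R y z \<Longrightarrow> R x z" "k \<le> k'"
  shows "R (f k) (f k')"
  using assms(4)
proof (induction k' rule: dec_induct)
  case base then show ?case using assms(2) .
next
  case (step m) then show ?case using assms(1,3) by blast
qed

lemma net_mono: "k \<le> k' \<Longrightarrow> net (ex k) \<subseteq> net (ex k')"
proof (induction k' rule: dec_induct)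
  case (step m) then show ?case using step_facts(1)[OF stp, of m] by blast
qed simp
lemma rcv_mono: "k \<le> k' \<Longrightarrow> rcv (loc (ex k) j) \<subseteq> rcv (loc (ex k') j)"
proof (induction k' rule: dec_induct)
  case (step m) then show ?case using step_facts(2)[OF stp, of m j] by blast
qed simp
lemma svsent_mono: "k \<le> k' \<Longrightarrow> svsent (loc (ex k) j) \<subseteq> svsent (loc (ex k') j)"
proof (induction k' rule: dec_induct)
  case (step m) then show ?case using step_facts(3)[OF stp, of m j] by blast
qed simp
lemma inv_mono: "k \<le> k' \<Longrightarrow> inv (loc (ex k) j) \<subseteq> inv (loc (ex k') j)"
proof (induction k' rule: dec_induct)
  case (step m) then show ?case using step_facts(4)[OF stp, of m j] by blast
qed simp

lemma rnd_step: "rnd (loc (ex k) j) \<le> rnd (loc (ex (Suc k)) j)"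
proof -
  have "rnd (loc (ex (Suc k)) j) = rnd (loc (ex k) j) \<or> step6 n t coin j (ex k) (ex (Suc k))"
    using step_facts(5)[OF stp, of k j] by blast
  then show ?thesis using step6_rnd[of n t coin j "ex k" "ex (Suc k)"] by linarith
qed
lemma rnd_mono: "k \<le> k' \<Longrightarrow> rnd (loc (ex k) j) \<le> rnd (loc (ex k') j)"
proof (induction k' rule: dec_induct)
  case (step m) then show ?case using rnd_step[of m j] by linarith
qed simp

lemma sval_tmono: "k \<le> k' \<Longrightarrow> sval n t (loc (ex k) j) T x \<Longrightarrow> sval n t (loc (ex k') j) T x"
  by (rule sval_mono[OF rcv_mono])
lemma cnt_tmono: "k \<le> k' \<Longrightarrow> cnt n (loc (ex k) j) T x \<le> cnt n (loc (ex k') j) T x"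
  by (rule cnt_mono[OF rcv_mono])

lemma rcv_tmono: "k \<le> k' \<Longrightarrow> (p,m) \<in> rcv (loc (ex k) j) \<Longrightarrow> (p,m) \<in> rcv (loc (ex k') j)"
  using rcv_mono[of k k' j] by blast

lemma fair_recv': "j \<in> NF \<Longrightarrow> i \<in> NF \<Longrightarrow> (j,i,m) \<in> net (ex k) \<Longrightarrow> \<exists>K. \<forall>k'\<ge>K. (j,m) \<in> rcv (loc (ex k') i)"
proof -
  assume "j \<in> NF" "i \<in> NF" "(j,i,m) \<in> net (ex k)"
  then obtain k' where k': "(j,m) \<in> rcv (loc (ex k') i)" using fair_recv by blast
  show ?thesis
  proof (intro exI allI impI)
    fix k'' assume "k' \<le> k''" then show "(j,m) \<in> rcv (loc (ex k'') i)" using k' by (rule rcv_tmono)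
  qed
qed

end



context A2 begin

lemma I_rnd: "j \<in> NF \<Longrightarrow> 1 \<le> rnd (loc (ex k) j)"
  by (rule LIl_D(1)[OF LI])
lemma I_ptr: "j \<in> NF \<Longrightarrow> ptr (loc (ex k) j) = Pp coin (rnd (loc (ex k) j))"
  by (rule LIl_D(2)[OF LI])
lemma I_inv: "j \<in> NF \<Longrightarrow> 1 \<le> r \<Longrightarrow> r \<le> rnd (loc (ex k) j) \<Longrightarrow> (Pp coin r x, x) \<in> inv (loc (ex k) j)"
  by (rule LIl_D(3)[OF LI])
lemma I_relay: "j \<in> NF \<Longrightarrow> (T,x) \<in> inv (loc (ex k) j) \<Longrightarrow> t+1 \<le> cnt n (loc (ex k) j) T x \<Longrightarrow> (T,x) \<in> svsent (loc (ex k) j)"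
  by (rule LIl_D(4)[OF LI])
lemma I_svsent_bcast: "j \<in> NF \<Longrightarrow> (T,x) \<in> svsent (loc (ex k) j) \<Longrightarrow> bcast n j (SVAL T x) \<subseteq> net (ex k)"
  by (rule LIl_D(5)[OF LI])
lemma I_net_svsent: "j \<in> NF \<Longrightarrow> (j,p,SVAL T x) \<in> net (ex k) \<Longrightarrow> (T,x) \<in> svsent (loc (ex k) j)"
  by (rule LIl_D(6)[OF LI])
lemma I_rcv_net: "j \<in> NF \<Longrightarrow> (q,m) \<in> rcv (loc (ex k) j) \<Longrightarrow> (q,j,m) \<in> net (ex k)"
  by (rule LIl_D(7)[OF LI])
lemma I_aux: "j \<in> NF \<Longrightarrow> (j,p,AUX r w) \<in> net (ex k) \<Longrightarrow> (r < rnd (loc (ex k) j) \<or> (r = rnd (loc (ex k) j) \<and> pc (loc (ex k) j) = At6)) \<and> sval n t (loc (ex k) j) (Pp coin r w) w"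
  by (rule LIl_D(8)[OF LI])
lemma I_aux_uniq: "j \<in> NF \<Longrightarrow> (j,p,AUX r w) \<in> net (ex k) \<Longrightarrow> (j,p',AUX r w') \<in> net (ex k) \<Longrightarrow> w = w'"
  by (rule LIl_D(9)[OF LI])
lemma I_aux_sent: "j \<in> NF \<Longrightarrow> 1 \<le> r \<Longrightarrow> (r < rnd (loc (ex k) j) \<or> (r = rnd (loc (ex k) j) \<and> pc (loc (ex k) j) = At6)) \<Longrightarrow> (\<exists>w. bcast n j (AUX r w) \<subseteq> net (ex k))"
  by (rule LIl_D(10)[OF LI])
lemma I_supp: "j \<in> NF \<Longrightarrow> supp (loc (ex k) j) \<Longrightarrow> sval n t (loc (ex k) j) (Pp coin (rnd (loc (ex k) j)) (est (loc (ex k) j))) (est (loc (ex k) j))"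
  by (rule LIl_D(11)[OF LI])
lemma I_props: "j \<in> NF \<Longrightarrow> (1, props j) \<in> svsent (loc (ex k) j)"
  by (rule LIl_D(12)[OF LI])
lemma I_round: "j \<in> NF \<Longrightarrow> 2 \<le> r \<Longrightarrow> r \<le> rnd (loc (ex k) j) \<Longrightarrow> (r, \<not>coin(r-1)) \<in> svsent (loc (ex k) j) \<or> sval n t (loc (ex k) j) (Pp coin r (coin(r-1))) (coin(r-1))"
  by (rule LIl_D(13)[OF LI])

lemma flagP: "j \<in> NF \<Longrightarrow> flag n t (loc (ex k) j) x = sval n t (loc (ex k) j) (Pp coin (rnd (loc (ex k) j)) x) x"
  using I_ptr[of j k] by (simp add: flag_def)

lemma senders:
  assumes j: "j \<in> NF" and c: "2*t+1 \<le> cnt n (loc (ex k) j) T x"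
  shows "\<exists>Q \<subseteq> NF. t+1 \<le> card Q \<and> (\<forall>q\<in>Q. (T,x) \<in> svsent (loc (ex k) q))"
proof -
  define A where "A = {q. q < n \<and> (q, SVAL T x) \<in> rcv (loc (ex k) j)}"
  have cA: "2*t+1 \<le> card A" using c unfolding A_def cnt_def .
  have fA: "finite A" unfolding A_def by simp
  have "A \<subseteq> (A - F) \<union> F" by blast
  moreover have "finite ((A - F) \<union> F)" using fA finF by simp
  ultimately have "card A \<le> card ((A - F) \<union> F)" by (rule card_mono[rotated])
  also have "\<dots> \<le> card (A - F) + card F" by (rule card_Un_le)
  finally have c2: "t+1 \<le> card (A - F)" using cA cF by linarith
  have sub: "A - F \<subseteq> NF" unfolding A_def NF_def by auto
  have "\<forall>q\<in>A - F. (T,x) \<in> svsent (loc (ex k) q)"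
  proof
    fix q assume q: "q \<in> A - F"
    then have "(q, SVAL T x) \<in> rcv (loc (ex k) j)" unfolding A_def by auto
    then have "(q, j, SVAL T x) \<in> net (ex k)" using I_rcv_net[OF j] by blast
    then show "(T,x) \<in> svsent (loc (ex k) q)" using I_net_svsent[of q j T x k] q sub by blast
  qed
  then show ?thesis using sub c2 by (intro exI[of _ "A - F"]) simp
qed

lemma all_recv:
  assumes Q: "Q \<subseteq> NF" and sv: "\<forall>q\<in>Q. (T,x) \<in> svsent (loc (ex k0) q)"
  shows "\<exists>K. \<forall>k\<ge>K. \<forall>j\<in>NF. Q \<subseteq> {q. q < n \<and> (q, SVAL T x) \<in> rcv (loc (ex k) j)}"
proof -
  have "\<forall>p\<in>Q \<times> NF. \<exists>K. \<forall>k\<ge>K. (fst p, SVAL T x) \<in> rcv (loc (ex k) (snd p))"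
  proof
    fix p assume p: "p \<in> Q \<times> NF"
    obtain q j where pq: "p = (q,j)" "q \<in> Q" "j \<in> NF" using p by auto
    have "bcast n q (SVAL T x) \<subseteq> net (ex k0)" using I_svsent_bcast[of q T x k0] sv pq Q by blast
    moreover have "j < n" using pq unfolding NF_def by simp
    ultimately have "(q, j, SVAL T x) \<in> net (ex k0)" by (auto simp: bcast_def)
    then show "\<exists>K. \<forall>k\<ge>K. (fst p, SVAL T x) \<in> rcv (loc (ex k) (snd p))"
      using fair_recv'[of q j "SVAL T x" k0] pq Q by auto
  qed
  moreover have "finite (Q \<times> NF)" using Q finNF finite_subset by blast
  ultimately obtain K where K: "\<forall>k\<ge>K. \<forall>p\<in>Q \<times> NF. (fst p, SVAL T x) \<in> rcv (loc (ex k) (snd p))"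
    using ev_all[of "Q \<times> NF" "\<lambda>p k. (fst p, SVAL T x) \<in> rcv (loc (ex k) (snd p))"] by blast
  show ?thesis
  proof (intro exI[of _ K] allI impI ballI subsetI)
    fix k j q assume "K \<le> k" "j \<in> NF" "q \<in> Q"
    then show "q \<in> {q. q < n \<and> (q, SVAL T x) \<in> rcv (loc (ex k) j)}"
      using K Q unfolding NF_def by force
  qed
qed

lemma card_recv:
  assumes "Q \<subseteq> {q. q < n \<and> (q, SVAL T x) \<in> rcv (loc (ex k) j)}"
  shows "card Q \<le> cnt n (loc (ex k) j) T x"
  unfolding cnt_def using assms by (intro card_mono) auto

lemma amp:
  assumes inv0: "\<forall>j\<in>NF. (T,x) \<in> inv (loc (ex K0) j)"
    and Q: "Q \<subseteq> NF" "t+1 \<le> card Q" and sv: "\<forall>q\<in>Q. (T,x) \<in> svsent (loc (ex k0) q)"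
  shows "\<exists>K. \<forall>k\<ge>K. \<forall>j\<in>NF. 2*t+1 \<le> cnt n (loc (ex k) j) T x"
proof -
  obtain K1 where K1: "\<forall>k\<ge>K1. \<forall>j\<in>NF. Q \<subseteq> {q. q < n \<and> (q, SVAL T x) \<in> rcv (loc (ex k) j)}"
    using all_recv[OF Q(1) sv] by blast
  define K1' where "K1' = max K1 K0"
  have all: "\<forall>j\<in>NF. (T,x) \<in> svsent (loc (ex K1') j)"
  proof
    fix j assume j: "j \<in> NF"
    have "card Q \<le> cnt n (loc (ex K1') j) T x" using K1 j K1'_def by (intro card_recv) auto
    then have c: "t+1 \<le> cnt n (loc (ex K1') j) T x" using Q(2) by linarith
    have "(T,x) \<in> inv (loc (ex K1') j)" using inv0 j inv_mono[of K0 K1' j] K1'_def by auto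
    then show "(T,x) \<in> svsent (loc (ex K1') j)" using I_relay[OF j] c by blast
  qed
  obtain K2 where K2: "\<forall>k\<ge>K2. \<forall>j\<in>NF. NF \<subseteq> {q. q < n \<and> (q, SVAL T x) \<in> rcv (loc (ex k) j)}"
    using all_recv[OF _ all] by blast
  show ?thesis
  proof (intro exI[of _ K2] allI impI ballI)
    fix k j assume "K2 \<le> k" "j \<in> NF"
    then have "card NF \<le> cnt n (loc (ex k) j) T x" using K2 by (intro card_recv) auto
    then show "2*t+1 \<le> cnt n (loc (ex k) j) T x" using cardNF nt by linarith
  qed
qed

lemma amp_sval:
  assumes inv0: "\<forall>j\<in>NF. (T,x) \<in> inv (loc (ex K0) j)"
    and q: "q \<in> NF" "sval n t (loc (ex k0) q) T x"
  shows "\<exists>K. \<forall>k\<ge>K. \<forall>j\<in>NF. sval n t (loc (ex k) j) T x"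
proof -
  have "2*t+1 \<le> cnt n (loc (ex k0) q) T x" using q(2) unfolding sval_def .
  from senders[OF q(1) this] obtain Q where "Q \<subseteq> NF" "t+1 \<le> card Q" "\<forall>q\<in>Q. (T,x) \<in> svsent (loc (ex k0) q)"
    by blast
  from amp[OF inv0 this] show ?thesis unfolding sval_def .
qed

end


lemma Pp_round: "2 \<le> r \<Longrightarrow> Pp coin r (\<not> coin (r - 1)) = r"
  by (cases r) auto

lemma Pp_one: "Pp coin 1 x = 1" by simp

context A2 begin

lemma rnd_between: "k \<le> k'' \<Longrightarrow> k'' \<le> k' \<Longrightarrow> rnd (loc (ex k') j) = rnd (loc (ex k) j) \<Longrightarrow> rnd (loc (ex k'') j) = rnd (loc (ex k) j)"
  using rnd_mono[of k k'' j] rnd_mono[of k'' k' j] by linarith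

lemma pc6_stays:
  assumes "k \<le> k'" "rnd (loc (ex k') j) = rnd (loc (ex k) j)" "pc (loc (ex k) j) = At6"
  shows "pc (loc (ex k') j) = At6"
  using assms
proof (induction k' rule: dec_induct)
  case base then show ?case by simp
next
  case (step m)
  have rm: "rnd (loc (ex m) j) = rnd (loc (ex k) j)" 
    using rnd_between[of k m "Suc m" j] step by simp
  have "(rnd (loc (ex (Suc m)) j) = rnd (loc (ex m) j) \<and> dec (loc (ex (Suc m)) j) = dec (loc (ex m) j) \<and>
        (pc (loc (ex m) j) = At6 \<longrightarrow> pc (loc (ex (Suc m)) j) = At6)) \<or> step6 n t coin j (ex m) (ex (Suc m))"
    by (rule step_facts(5)[OF stp])
  moreover have "\<not> step6 n t coin j (ex m) (ex (Suc m))"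
  proof
    assume "step6 n t coin j (ex m) (ex (Suc m))"
    then have "rnd (loc (ex (Suc m)) j) = Suc (rnd (loc (ex m) j))" by (rule step6_rnd)
    then show False using rm step.prems by simp
  qed
  ultimately show ?case using step rm by simp
qed

lemma leave:
  assumes "k1 \<le> k" "rnd (loc (ex k1) j) = r" "r < rnd (loc (ex k) j)"
  shows "\<exists>k2\<ge>k1. rnd (loc (ex k2) j) = r \<and> step6 n t coin j (ex k2) (ex (Suc k2))"
  using assms
proof (induction k rule: dec_induct)
  case base then show ?case by simp
next
  case (step m)
  show ?case
  proof (cases "r < rnd (loc (ex m) j)")
    case True then show ?thesis using step by blast
  next
    case False
    then have rm: "rnd (loc (ex m) j) = r" using rnd_mono[of k1 m j] step by linarith
    have "(rnd (loc (ex (Suc m)) j) = rnd (loc (ex m) j) \<and> dec (loc (ex (Suc m)) j) = dec (loc (ex m) j) \<and>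
        (pc (loc (ex m) j) = At6 \<longrightarrow> pc (loc (ex (Suc m)) j) = At6)) \<or> step6 n t coin j (ex m) (ex (Suc m))"
      by (rule step_facts(5)[OF stp])
    then have "step6 n t coin j (ex m) (ex (Suc m))" using rm step.prems by auto
    then show ?thesis using rm step.hyps by auto
  qed
qed

lemma reach_at6:
  assumes j: "j \<in> NF" and st: "\<forall>k\<ge>K. rnd (loc (ex k) j) = r"
    and fl: "\<forall>k\<ge>K1. flag n t (loc (ex k) j) x"
  shows "\<exists>K2. \<forall>k\<ge>K2. pc (loc (ex k) j) = At6"
proof -
  define K' where "K' = max K K1"
  have "\<exists>k'\<ge>K'. pc (loc (ex k') j) = At6"
  proof (rule ccontr)
    assume "\<not> (\<exists>k'\<ge>K'. pc (loc (ex k') j) = At6)"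
    then have p3: "\<forall>k'\<ge>K'. pc (loc (ex k') j) = At3" using pcl.exhaust by blast
    have "\<forall>k'\<ge>K'. enabled n t j (ex k')"
    proof (intro allI impI)
      fix k' assume "K' \<le> k'"
      then have "pc (loc (ex k') j) = At3" "flag n t (loc (ex k') j) x" using p3 fl K'_def by auto
      then show "enabled n t j (ex k')" unfolding enabled_def Let_def by (cases x) auto
    qed
    then obtain k' where k': "k' \<ge> K'" "step3 n t j (ex k') (ex (Suc k')) \<or> step6 n t coin j (ex k') (ex (Suc k'))"
      using fair_step[OF j] by blast
    then show False
    proof (elim disjE)
      assume "step3 n t j (ex k') (ex (Suc k'))"
      then have "pc (loc (ex (Suc k')) j) = At6" using step3_pc by blast
      then show False using p3 k'(1) by (metis le_SucI pcl.distinct(1))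
    next
      assume "step6 n t coin j (ex k') (ex (Suc k'))"
      then have "rnd (loc (ex (Suc k')) j) = Suc (rnd (loc (ex k') j))" by (rule step6_rnd)
      then show False using st k'(1) K'_def by (metis le_SucI max.boundedE n_not_Suc_n)
    qed
  qed
  then obtain k' where k': "k' \<ge> K'" "pc (loc (ex k') j) = At6" by blast
  show ?thesis
  proof (intro exI[of _ k'] allI impI)
    fix k assume "k' \<le> k"
    moreover have "rnd (loc (ex k) j) = rnd (loc (ex k') j)" using st k'(1) \<open>k' \<le> k\<close> K'_def by simp
    ultimately show "pc (loc (ex k) j) = At6" using pc6_stays k'(2) by blast
  qed
qed

end


context A2 begin

lemma step1:
  assumes r1: "1 \<le> r" and K0: "\<forall>j\<in>NF. \<forall>k\<ge>K0. r \<le> rnd (loc (ex k) j)"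
  shows "\<exists>x K1. \<forall>k\<ge>K1. \<forall>j\<in>NF. sval n t (loc (ex k) j) (Pp coin r x) x"
proof -
  have inv0: "\<forall>j\<in>NF. (Pp coin r x, x) \<in> inv (loc (ex K0) j)" for x
    using K0 I_inv r1 by blast
  show ?thesis
  proof (cases "r = 1")
    case True
    define A1 where "A1 = {j \<in> NF. props j}"
    define A0 where "A0 = {j \<in> NF. \<not> props j}"
    have "card A1 + card A0 = card NF"
    proof -
      have "NF = A1 \<union> A0" "A1 \<inter> A0 = {}" unfolding A1_def A0_def by auto
      moreover have "finite A1" "finite A0" unfolding A1_def A0_def using finNF by auto
      ultimately show ?thesis using card_Un_disjoint by metis
    qed
    then have "t+1 \<le> card A1 \<or> t+1 \<le> card A0" using cardNF nt by linarith
    then obtain x Q where Q: "Q \<subseteq> NF" "t+1 \<le> card Q" "\<forall>q\<in>Q. (1, x) \<in> svsent (loc (ex 0) q)"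
    proof (elim disjE)
      assume "t+1 \<le> card A1"
      moreover have "\<forall>q\<in>A1. (1, True) \<in> svsent (loc (ex 0) q)" using I_props unfolding A1_def by fastforce
      moreover have "A1 \<subseteq> NF" unfolding A1_def by auto
      ultimately show ?thesis using that by blast
    next
      assume "t+1 \<le> card A0"
      moreover have "\<forall>q\<in>A0. (1, False) \<in> svsent (loc (ex 0) q)" using I_props unfolding A0_def by fastforce
      moreover have "A0 \<subseteq> NF" unfolding A0_def by auto
      ultimately show ?thesis using that by blast
    qed
    have "\<forall>q\<in>Q. (Pp coin r x, x) \<in> svsent (loc (ex 0) q)" using Q(3) True by simp
    from amp[OF inv0 Q(1,2) this] show ?thesis unfolding sval_def by blast
  next
    case False
    then have r2: "2 \<le> r" using r1 by simp
    define e where "e = coin (r - 1)"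
    show ?thesis
    proof (cases "\<exists>q\<in>NF. sval n t (loc (ex K0) q) (Pp coin r e) e")
      case True
      then obtain q where "q \<in> NF" "sval n t (loc (ex K0) q) (Pp coin r e) e" by blast
      from amp_sval[OF inv0 this] show ?thesis by blast
    next
      case False
      have "\<forall>q\<in>NF. (Pp coin r (\<not> e), \<not> e) \<in> svsent (loc (ex K0) q)"
      proof
        fix q assume q: "q \<in> NF"
        have "(r, \<not>coin(r-1)) \<in> svsent (loc (ex K0) q) \<or> sval n t (loc (ex K0) q) (Pp coin r (coin(r-1))) (coin(r-1))"
          using I_round[OF q r2] K0 q by blast
        then show "(Pp coin r (\<not> e), \<not> e) \<in> svsent (loc (ex K0) q)"
          using False q Pp_round[OF r2, of coin] unfolding e_def by auto
      qed
      moreover have "t+1 \<le> card NF" using cardNF nt by linarith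
      ultimately show ?thesis using amp[OF inv0 order_refl] unfolding sval_def by blast
    qed
  qed
qed

end


context A2 begin

lemma n_pos: "0 < n" using nt by simp

lemma no_stuck:
  assumes r1: "1 \<le> r" and allr: "\<forall>j\<in>NF. \<forall>k\<ge>K0. r \<le> rnd (loc (ex k) j)"
    and j0: "j0 \<in> NF" and st: "\<forall>k\<ge>K0. rnd (loc (ex k) j0) = r"
  shows False
proof -
  obtain x K1 where K1: "\<forall>k\<ge>K1. \<forall>j\<in>NF. sval n t (loc (ex k) j) (Pp coin r x) x"
    using step1[OF r1 allr] by blast
  have inv0: "\<forall>j\<in>NF. (Pp coin r w, w) \<in> inv (loc (ex K0) j)" for w
    using allr I_inv r1 by blast
  have flq: "\<forall>k\<ge>max K0 K1. flag n t (loc (ex k) q) x" if q: "q \<in> NF" and sq: "\<forall>k\<ge>K0. rnd (loc (ex k) q) = r" for q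
  proof (intro allI impI)
    fix k assume "max K0 K1 \<le> k"
    then show "flag n t (loc (ex k) q) x" using flagP[OF q] K1 sq q by simp
  qed
  have ev6: "\<exists>k. r < rnd (loc (ex k) q) \<or> (r = rnd (loc (ex k) q) \<and> pc (loc (ex k) q) = At6)"
    if q: "q \<in> NF" for q
  proof (cases "\<exists>k. r < rnd (loc (ex k) q)")
    case True then show ?thesis by blast
  next
    case False
    have sq: "\<forall>k\<ge>K0. rnd (loc (ex k) q) = r"
    proof (intro allI impI)
      fix k assume "K0 \<le> k"
      then have "r \<le> rnd (loc (ex k) q)" using allr q by blast
      moreover have "\<not> r < rnd (loc (ex k) q)" using False by blast
      ultimately show "rnd (loc (ex k) q) = r" by simp
    qed
    obtain K2 where "\<forall>k\<ge>K2. pc (loc (ex k) q) = At6" using reach_at6[OF q sq flq[OF q sq]] by blast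
    then show ?thesis using sq by (intro exI[of _ "max K0 K2"]) simp
  qed
  have ev: "\<exists>w K. \<forall>k\<ge>K. (q, AUX r w) \<in> rcv (loc (ex k) j0) \<and> sval n t (loc (ex k) j0) (Pp coin r w) w"
    if q: "q \<in> NF" for q
  proof -
    obtain k where k: "r < rnd (loc (ex k) q) \<or> (r = rnd (loc (ex k) q) \<and> pc (loc (ex k) q) = At6)"
      using ev6[OF q] by blast
    obtain w where w: "bcast n q (AUX r w) \<subseteq> net (ex k)" using I_aux_sent[OF q r1 k] by blast
    have "j0 < n" using j0 unfolding NF_def by simp
    then have qj: "(q, j0, AUX r w) \<in> net (ex k)" using w by (auto simp: bcast_def)
    then have "sval n t (loc (ex k) q) (Pp coin r w) w" using I_aux[OF q] by blast
    then obtain Kb where Kb: "\<forall>k\<ge>Kb. \<forall>j\<in>NF. sval n t (loc (ex k) j) (Pp coin r w) w"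
      using amp_sval[OF inv0 q] by blast
    obtain Ka where Ka: "\<forall>k\<ge>Ka. (q, AUX r w) \<in> rcv (loc (ex k) j0)"
      using fair_recv'[OF q j0 qj] by blast
    show ?thesis
    proof (intro exI[of _ w] exI[of _ "max Ka Kb"] allI impI conjI)
      fix k assume "max Ka Kb \<le> k"
      then show "(q, AUX r w) \<in> rcv (loc (ex k) j0)" "sval n t (loc (ex k) j0) (Pp coin r w) w"
        using Ka Kb j0 by auto
    qed
  qed
  have EV: "\<forall>q\<in>NF. \<exists>w. \<exists>K. \<forall>k\<ge>K. (q, AUX r w) \<in> rcv (loc (ex k) j0) \<and> sval n t (loc (ex k) j0) (Pp coin r w) w"
    by (intro ballI ev)
  from bchoice[OF EV] obtain ws where ws: "\<forall>q\<in>NF. \<exists>K. \<forall>k\<ge>K. (q, AUX r (ws q)) \<in> rcv (loc (ex k) j0) \<and> sval n t (loc (ex k) j0) (Pp coin r (ws q)) (ws q)"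
    by blast
  obtain K3 where K3: "\<forall>k\<ge>K3. \<forall>q\<in>NF. (q, AUX r (ws q)) \<in> rcv (loc (ex k) j0) \<and> sval n t (loc (ex k) j0) (Pp coin r (ws q)) (ws q)"
    using ev_all[OF finNF ws] by blast
  obtain K4 where K4: "\<forall>k\<ge>K4. pc (loc (ex k) j0) = At6" using reach_at6[OF j0 st flq[OF j0 st]] by blast
  obtain S where S: "S \<subseteq> NF" "card S = n - t" using obtain_subset_with_card_n[OF cardNF] by metis
  define K where "K = max K0 (max K3 K4)"
  have en: "\<forall>k\<ge>K. enabled n t j0 (ex k)"
  proof (intro allI impI)
    fix k assume kK: "K \<le> k"
    have vo: "view_ok n t (loc (ex k) j0) S ws" unfolding view_ok_def
    proof (intro conjI ballI)
      show "S \<subseteq> {..<n}" using S unfolding NF_def by auto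
      show "card S = n - t" using S by simp
    next
      fix q assume q: "q \<in> S"
      then have qN: "q \<in> NF" using S by auto
      have rk: "rnd (loc (ex k) j0) = r" using st kK K_def by simp
      show "(q, AUX (rnd (loc (ex k) j0)) (ws q)) \<in> rcv (loc (ex k) j0)" using K3 kK K_def qN rk by auto
      show "flag n t (loc (ex k) j0) (ws q)" using K3 kK K_def qN rk flagP[OF j0] by auto
    qed
    have "pc (loc (ex k) j0) = At6" using K4 kK K_def by simp
    then show "enabled n t j0 (ex k)" using vo unfolding enabled_def Let_def by blast
  qed
  obtain k' where k': "k' \<ge> K" "step3 n t j0 (ex k') (ex (Suc k')) \<or> step6 n t coin j0 (ex k') (ex (Suc k'))"
    using fair_step[OF j0 en] by blast
  show False using k'(2)
  proof (elim disjE)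
    assume "step3 n t j0 (ex k') (ex (Suc k'))"
    then have "pc (loc (ex k') j0) = At3" by (rule step3_loc)
    then show False using K4 k'(1) K_def by simp
  next
    assume "step6 n t coin j0 (ex k') (ex (Suc k'))"
    then have "rnd (loc (ex (Suc k')) j0) = Suc (rnd (loc (ex k') j0))" by (rule step6_rnd)
    then show False using st k'(1) K_def by (metis le_SucI max.boundedE n_not_Suc_n)
  qed
qed

lemma reach: "1 \<le> r \<Longrightarrow> j \<in> NF \<Longrightarrow> \<exists>k. r \<le> rnd (loc (ex k) j)"
proof (induction r arbitrary: j rule: nat_induct_at_least)
  case base then show ?case using I_rnd by blast
next
  case (Suc r)
  have "\<forall>j\<in>NF. \<exists>K. \<forall>k\<ge>K. r \<le> rnd (loc (ex k) j)"
  proof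
    fix j assume "j \<in> NF"
    then obtain k where "r \<le> rnd (loc (ex k) j)" using Suc.IH by blast
    then show "\<exists>K. \<forall>k'\<ge>K. r \<le> rnd (loc (ex k') j)"
    proof (intro exI[of _ k] allI impI)
      fix k' assume "r \<le> rnd (loc (ex k) j)" "k \<le> k'"
      then show "r \<le> rnd (loc (ex k') j)" using rnd_mono[of k k' j] by linarith
    qed
  qed
  then obtain K0 where K0: "\<forall>k\<ge>K0. \<forall>j\<in>NF. r \<le> rnd (loc (ex k) j)" using ev_all[where P="\<lambda>j k. r \<le> rnd (loc (ex k) j)", OF finNF] by blast
  show ?case
  proof (rule ccontr)
    assume "\<not> (\<exists>k. Suc r \<le> rnd (loc (ex k) j))"
    then have nn: "\<forall>k. rnd (loc (ex k) j) \<le> r" by (simp add: not_le less_Suc_eq_le)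
    have st: "\<forall>k\<ge>K0. rnd (loc (ex k) j) = r"
    proof (intro allI impI)
      fix k assume "K0 \<le> k"
      then have "r \<le> rnd (loc (ex k) j)" using K0 Suc.prems by blast
      then show "rnd (loc (ex k) j) = r" using nn[rule_format, of k] by simp
    qed
    have allr: "\<forall>j\<in>NF. \<forall>k\<ge>K0. r \<le> rnd (loc (ex k) j)" using K0 by blast
    show False by (rule no_stuck[OF Suc.hyps allr Suc.prems st])
  qed
qed

end


context A2 begin

lemma dec0: "j \<in> NF \<Longrightarrow> dec (loc (ex 0) j) = None"
  using exe unfolding execution_def init_state_def NF_def by auto

lemma net0: "net (ex 0) = (\<Union>i\<in>{i. i < n \<and> i \<notin> F}. bcast n i (SVAL 1 (props i)))"
  using exe unfolding execution_def init_state_def by auto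

lemma dec_origin:
  assumes j: "j \<in> NF" and d: "dec (loc (ex k) j) = Some (x, r)"
  shows "\<exists>k0. step6 n t coin j (ex k0) (ex (Suc k0)) \<and> rnd (loc (ex k0) j) = r \<and> coin r = x \<and>
           (\<exists>S ws. view_ok n t (loc (ex k0) j) S ws \<and> ws ` S = {x})"
  using d
proof (induction k)
  case 0 then show ?case using dec0[OF j] by simp
next
  case (Suc k)
  show ?case
  proof (cases "dec (loc (ex k) j) = Some (x, r)")
    case True then show ?thesis using Suc.IH by blast
  next
    case False
    have "(rnd (loc (ex (Suc k)) j) = rnd (loc (ex k) j) \<and> dec (loc (ex (Suc k)) j) = dec (loc (ex k) j) \<and>
        (pc (loc (ex k) j) = At6 \<longrightarrow> pc (loc (ex (Suc k)) j) = At6)) \<or> step6 n t coin j (ex k) (ex (Suc k))"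
      by (rule step_facts(5)[OF stp])
    then have s6: "step6 n t coin j (ex k) (ex (Suc k))" using False Suc.prems by (elim disjE) auto
    obtain S ws where H: "view_ok n t (loc (ex k) j) S ws \<and>
   supp (loc (ex (Suc k)) j) = (ws ` S = {coin (rnd (loc (ex k) j))} \<or> ws ` S = {False, True}) \<and>
   dec (loc (ex (Suc k)) j) = (if ws ` S = {coin (rnd (loc (ex k) j))} \<and> dec (loc (ex k) j) = None 
                        then Some (coin (rnd (loc (ex k) j)), rnd (loc (ex k) j)) else dec (loc (ex k) j))"
      using step6_view[OF s6] by (elim exE) (rule that)
    have vo: "view_ok n t (loc (ex k) j) S ws" using H by (rule conjunct1)
    have dd: "dec (loc (ex (Suc k)) j) = (if ws ` S = {coin (rnd (loc (ex k) j))} \<and> dec (loc (ex k) j) = None 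
                        then Some (coin (rnd (loc (ex k) j)), rnd (loc (ex k) j)) else dec (loc (ex k) j))"
      using H by (elim conjE)
    have c: "ws ` S = {coin (rnd (loc (ex k) j))} \<and> dec (loc (ex k) j) = None"
      using dd False Suc.prems by (auto split: if_splits)
    then have "Some (x, r) = Some (coin (rnd (loc (ex k) j)), rnd (loc (ex k) j))" using dd Suc.prems by simp
    then have "x = coin (rnd (loc (ex k) j))" "r = rnd (loc (ex k) j)" by auto
    then show ?thesis using s6 vo c by (intro exI[of _ k]) auto
  qed
qed

lemma inter_big:
  assumes "S \<subseteq> {..<n}" "S1 \<subseteq> {..<n}" "card S = n - t" "card S1 = n - t"
  shows "\<exists>q\<in>S \<inter> S1. q \<in> NF"
proof -
  have fS: "finite S" "finite S1" using assms finite_subset by auto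
  have "S \<union> S1 \<subseteq> {..<n}" using assms(1,2) by blast
  then have "card (S \<union> S1) \<le> card {..<n}" by (rule card_mono[rotated]) simp
  then have "card (S \<union> S1) \<le> n" by simp
  moreover have "card (S \<union> S1) + card (S \<inter> S1) = card S + card S1" using card_Un_Int fS by metis
  ultimately have ci: "t + 1 \<le> card (S \<inter> S1)" using assms(3,4) nt by linarith
  have "S \<inter> S1 \<subseteq> ((S \<inter> S1) - F) \<union> F" by blast
  moreover have "finite (((S \<inter> S1) - F) \<union> F)" using fS finF by simp
  ultimately have "card (S \<inter> S1) \<le> card (((S \<inter> S1) - F) \<union> F)" by (rule card_mono[rotated])
  also have "\<dots> \<le> card ((S \<inter> S1) - F) + card F" by (rule card_Un_le)
  finally have "0 < card ((S \<inter> S1) - F)" using ci cF by linarith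
  then have "(S \<inter> S1) - F \<noteq> {}" by (metis card.empty less_irrefl)
  then obtain q where "q \<in> (S \<inter> S1) - F" by blast
  then show ?thesis using assms(1) unfolding NF_def by blast
qed

end

locale Dec = A2 +
  fixes i v r ki S1 ws1
  assumes iNF: "i \<in> NF" and vo1: "view_ok n t (loc (ex ki) i) S1 ws1" and ws1: "ws1 ` S1 = {v}"
    and ri: "rnd (loc (ex ki) i) = r" and cr: "coin r = v"
begin

definition BT where "BT = {T. \<exists>r'\<ge>r. T = Suc r' \<and> coin r' = v}"

definition Safe where "Safe k \<longleftrightarrow> (\<forall>q\<in>NF. \<forall>p T. T \<in> BT \<longrightarrow> (q, p, SVAL T (\<not> v)) \<notin> net (ex k))"

lemma r1: "1 \<le> r" using I_rnd[OF iNF, of ki] ri by simp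

lemma aux1: "q \<in> S1 \<Longrightarrow> (q, i, AUX r v) \<in> net (ex ki)"
proof -
  assume q: "q \<in> S1"
  then have "(q, AUX r (ws1 q)) \<in> rcv (loc (ex ki) i)" using vo1 ri unfolding view_ok_def by auto
  moreover have "ws1 q = v" using ws1 q by auto
  ultimately show ?thesis using I_rcv_net[OF iNF] by auto
qed

lemma viewV:
  assumes j: "j \<in> NF" and vo: "view_ok n t (loc (ex k) j) S ws" and rk: "rnd (loc (ex k) j) = r"
  shows "ws ` S \<noteq> {\<not> v}"
proof
  assume h: "ws ` S = {\<not> v}"
  have "S \<subseteq> {..<n}" "card S = n - t" using vo unfolding view_ok_def by auto
  moreover have "S1 \<subseteq> {..<n}" "card S1 = n - t" using vo1 unfolding view_ok_def by auto
  ultimately obtain q where q: "q \<in> S" "q \<in> S1" "q \<in> NF" using inter_big by blast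
  have "(q, AUX r (ws q)) \<in> rcv (loc (ex k) j)" using vo q rk unfolding view_ok_def by auto
  moreover have "ws q = (\<not> v)" using h q by auto
  ultimately have a1: "(q, j, AUX r (\<not> v)) \<in> net (ex k)" using I_rcv_net[OF j] by auto
  have a2: "(q, i, AUX r v) \<in> net (ex ki)" using aux1 q by blast
  have "(q, j, AUX r (\<not> v)) \<in> net (ex (max k ki))" using a1 net_mono[of k "max k ki"] by auto
  moreover have "(q, i, AUX r v) \<in> net (ex (max k ki))" using a2 net_mono[of ki "max k ki"] by auto
  ultimately show False using I_aux_uniq[OF q(3)] by blast
qed

lemma Pbad: "r < r' \<Longrightarrow> Pp coin r' (\<not> v) \<in> BT"
proof (induction r' rule: less_induct)
  case (less r')
  obtain r'' where r0: "r' = Suc r''" using less.prems by (cases r') auto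
  then have r'': "r' = Suc r''" "r \<le> r''" using less.prems by auto
  have "1 \<le> r''" using r1 r'' by simp
  show ?case
  proof (cases "coin r'' = v")
    case True then show ?thesis using r'' \<open>1 \<le> r''\<close> unfolding BT_def by auto
  next
    case False
    then have "r < r''" using r'' cr by (cases "r'' = r") auto
    then have "Pp coin r'' (\<not> v) \<in> BT" using less.IH[of r''] r'' by simp
    then show ?thesis using r'' False \<open>1 \<le> r''\<close> by auto
  qed
qed

lemma cnt_small:
  assumes "\<And>p. p < n \<Longrightarrow> (p, SVAL T (\<not> v)) \<in> rcv (loc g j) \<Longrightarrow> p \<in> F"
  shows "cnt n (loc g j) T (\<not> v) \<le> t"
proof -
  have "{q. q < n \<and> (q, SVAL T (\<not> v)) \<in> rcv (loc g j)} \<subseteq> F" using assms by blast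
  then have "cnt n (loc g j) T (\<not> v) \<le> card F" unfolding cnt_def using finF by (rule card_mono[rotated])
  then show ?thesis using cF by linarith
qed

lemma cnt_safe:
  assumes S: "Safe k" and j: "j \<in> NF" and T: "T \<in> BT"
  shows "cnt n (loc (ex k) j) T (\<not> v) \<le> t"
proof (rule cnt_small)
  fix p assume p: "p < n" "(p, SVAL T (\<not> v)) \<in> rcv (loc (ex k) j)"
  show "p \<in> F"
  proof (rule ccontr)
    assume "p \<notin> F"
    then have pN: "p \<in> NF" using p unfolding NF_def by simp
    have "(p, j, SVAL T (\<not> v)) \<in> net (ex k)" using I_rcv_net[OF j p(2)] .
    then show False using S pN T unfolding Safe_def by blast
  qed
qed

end


lemma bool_ne: "(w::bool) \<noteq> v \<Longrightarrow> w = (\<not> v)" by auto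

context Dec begin

lemma nt0: "0 < n - t" using nt by simp

lemma factX:
  assumes S: "Safe k" and j: "j \<in> NF" and vo: "view_ok n t (loc (ex k) j) S ws"
    and rk: "rnd (loc (ex k) j) = r'" and rr: "r \<le> r'"
  shows "v \<in> ws ` S" "r < r' \<Longrightarrow> ws ` S = {v}"
proof -
  have "card S = n - t" using vo unfolding view_ok_def by simp
  then have "S \<noteq> {}" using nt0 by auto
  then have ne: "ws ` S \<noteq> {}" by simp
  have gt: "ws ` S = {v}" if rl: "r < r'"
  proof -
    have "ws ` S \<subseteq> {v}"
    proof
      fix w assume w: "w \<in> ws ` S"
      have "flag n t (loc (ex k) j) w" by (rule view_ok_flag[OF vo w])
      then have sv: "sval n t (loc (ex k) j) (Pp coin r' w) w" using flagP[OF j] rk by simp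
      show "w \<in> {v}"
      proof (rule ccontr)
        assume "w \<notin> {v}"
        then have wv: "w = (\<not> v)" by auto
        have "Pp coin r' (\<not> v) \<in> BT" using Pbad rl by blast
        then have "cnt n (loc (ex k) j) (Pp coin r' (\<not> v)) (\<not> v) \<le> t" using cnt_safe[OF S j] by blast
        then show False using sv wv unfolding sval_def by simp
      qed
    qed
    then show ?thesis using ne by blast
  qed
  show "r < r' \<Longrightarrow> ws ` S = {v}" by (rule gt)
  show "v \<in> ws ` S"
  proof (cases "r < r'")
    case True then show ?thesis using gt by simp
  next
    case False
    then have "rnd (loc (ex k) j) = r" using rr rk by simp
    then have nv: "ws ` S \<noteq> {\<not> v}" using viewV[OF j vo] by blast
    show ?thesis
    proof (rule ccontr)
      assume "v \<notin> ws ` S"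
      then have "ws ` S \<subseteq> {\<not> v}" using bool_ne by blast
      then show False using ne nv by blast
    qed
  qed
qed

lemma sp_true:
  assumes "v \<in> ws ` S" "r \<le> r'" "coin r' = v" "r < r' \<Longrightarrow> ws ` S = {v}"
  shows "ws ` S = {coin r'} \<or> ws ` S = {False, True}"
proof (cases "r < r'")
  case True then show ?thesis using assms by simp
next
  case False
  show ?thesis
  proof (cases "(\<not> v) \<in> ws ` S")
    case True
    then have "ws ` S = {False, True}" using assms(1) by (cases v) auto
    then show ?thesis by simp
  next
    case False
    have "ws ` S \<subseteq> {v}" using False bool_ne by blast
    then have "ws ` S = {v}" using assms(1) by blast
    then show ?thesis using assms(3) by simp
  qed
qed

lemma Safe0: "Safe 0"
  unfolding Safe_def
proof (intro ballI allI impI)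
  fix q p T assume q: "q \<in> NF" and T: "T \<in> BT"
  show "(q, p, SVAL T (\<not> v)) \<notin> net (ex 0)"
  proof
    assume "(q, p, SVAL T (\<not> v)) \<in> net (ex 0)"
    then have "T = 1" using net0 by (auto simp: bcast_mem)
    moreover have "2 \<le> T" using T r1 unfolding BT_def by auto
    ultimately show False by simp
  qed
qed

lemma Safe_step:
  assumes S: "Safe k" shows "Safe (Suc k)"
  unfolding Safe_def
proof (intro ballI allI impI)
  fix q p T assume q: "q \<in> NF" and T: "T \<in> BT"
  show "(q, p, SVAL T (\<not> v)) \<notin> net (ex (Suc k))"
  proof
    assume new: "(q, p, SVAL T (\<not> v)) \<in> net (ex (Suc k))"
    have old: "(q, p, SVAL T (\<not> v)) \<notin> net (ex k)" using S q T unfolding Safe_def by blast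
    have qF: "q \<notin> F" using q unfolding NF_def by simp
    have cs: "cnt n (loc (ex (Suc k)) q) T (\<not> v) \<le> t"
    proof (rule cnt_small)
      fix p' assume p': "p' < n" "(p', SVAL T (\<not> v)) \<in> rcv (loc (ex (Suc k)) q)"
      show "p' \<in> F"
      proof (rule ccontr)
        assume "p' \<notin> F"
        then have pN: "p' \<in> NF" using p' unfolding NF_def by simp
        have "(p', SVAL T (\<not> v)) \<in> rcv (loc (ex k) q) \<or> (p', q, SVAL T (\<not> v)) \<in> net (ex k)"
          using step_facts(6)[OF stp p'(2)] .
        then have "(p', q, SVAL T (\<not> v)) \<in> net (ex k)" using I_rcv_net[OF q] by blast
        then show False using S pN T unfolding Safe_def by blast
      qed
    qed
    have "q \<in> F \<or> (\<exists>w. SVAL T (\<not> v) = AUX (rnd (loc (ex k) q)) w \<and> step3 n t q (ex k) (ex (Suc k))) \<or>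
       (\<exists>T' x. SVAL T (\<not> v) = SVAL T' x \<and> (t+1 \<le> cnt n (loc (ex (Suc k)) q) T' x \<or> 
          (step6 n t coin q (ex k) (ex (Suc k)) \<and> T' = Suc (rnd (loc (ex k) q)) \<and> x = (\<not> coin (rnd (loc (ex k) q))) \<and>
           (\<exists>S ws. view_ok n t (loc (ex k) q) S ws \<and> \<not> (ws ` S = {coin (rnd (loc (ex k) q))} \<or> ws ` S = {False, True})))))"
      by (rule step_facts(7)[OF stp new old])
    then have "step6 n t coin q (ex k) (ex (Suc k)) \<and> T = Suc (rnd (loc (ex k) q)) \<and> (\<not> v) = (\<not> coin (rnd (loc (ex k) q))) \<and>
           (\<exists>S ws. view_ok n t (loc (ex k) q) S ws \<and> \<not> (ws ` S = {coin (rnd (loc (ex k) q))} \<or> ws ` S = {False, True}))"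
    proof (elim disjE exE)
      assume "q \<in> F" then show ?thesis using qF by simp
    next
      fix w assume "SVAL T (\<not> v) = AUX (rnd (loc (ex k) q)) w \<and> step3 n t q (ex k) (ex (Suc k))" then show ?thesis by simp
    next
      fix T' x assume h: "SVAL T (\<not> v) = SVAL T' x \<and> (t+1 \<le> cnt n (loc (ex (Suc k)) q) T' x \<or> 
          (step6 n t coin q (ex k) (ex (Suc k)) \<and> T' = Suc (rnd (loc (ex k) q)) \<and> x = (\<not> coin (rnd (loc (ex k) q))) \<and>
           (\<exists>S ws. view_ok n t (loc (ex k) q) S ws \<and> \<not> (ws ` S = {coin (rnd (loc (ex k) q))} \<or> ws ` S = {False, True}))))"
      then have e: "T = T'" "(\<not> v) = x" by simp_all
      have "\<not> t+1 \<le> cnt n (loc (ex (Suc k)) q) T' x" using cs e by simp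
      then show ?thesis using h e by simp
    qed
    then have h12: "T = Suc (rnd (loc (ex k) q))" "coin (rnd (loc (ex k) q)) = v"
      and EE: "\<exists>S ws. view_ok n t (loc (ex k) q) S ws \<and> \<not> (ws ` S = {coin (rnd (loc (ex k) q))} \<or> ws ` S = {False, True})"
      by simp_all
    from EE obtain S ws where h34: "view_ok n t (loc (ex k) q) S ws" "\<not> (ws ` S = {coin (rnd (loc (ex k) q))} \<or> ws ` S = {False, True})"
      by (elim exE conjE) (rule that)
    note h = h12 h34
    obtain r' where r': "T = Suc r'" "r \<le> r'" using T unfolding BT_def by blast
    have rq: "rnd (loc (ex k) q) = r'" using h(1) r'(1) by simp
    have "v \<in> ws ` S" "r < r' \<Longrightarrow> ws ` S = {v}" using factX[OF S q h(3) rq r'(2)] by blast+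
    from sp_true[OF this(1) r'(2) _ this(2)] h(2,4) rq show False by simp
  qed
qed

lemma Safe_all: "Safe k"
  by (induction k) (auto intro: Safe0 Safe_step)

end


context Dec begin

lemma concl_iii:
  assumes j: "j \<in> NF" and rr: "r < r'" and rk: "rnd (loc (ex k1) j) = r'"
  shows "\<not> flag n t (loc (ex k1) j) (\<not> v)"
proof
  assume "flag n t (loc (ex k1) j) (\<not> v)"
  then have sv: "sval n t (loc (ex k1) j) (Pp coin r' (\<not> v)) (\<not> v)" using flagP[OF j] rk by simp
  have "cnt n (loc (ex k1) j) (Pp coin r' (\<not> v)) (\<not> v) \<le> t" using cnt_safe[OF Safe_all j Pbad[OF rr]] .
  then show False using sv unfolding sval_def by simp
qed

lemma step6_view_v:
  assumes j: "j \<in> NF" and s6: "step6 n t coin j (ex k) (ex (Suc k))" and rk: "rnd (loc (ex k) j) = r'" and rr: "r \<le> r'"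
  shows "\<exists>S ws. view_ok n t (loc (ex k) j) S ws \<and> v \<in> ws ` S \<and> (r < r' \<longrightarrow> ws ` S = {v}) \<and>
     dec (loc (ex (Suc k)) j) = (if ws ` S = {coin (rnd (loc (ex k) j))} \<and> dec (loc (ex k) j) = None 
                        then Some (coin (rnd (loc (ex k) j)), rnd (loc (ex k) j)) else dec (loc (ex k) j))"
proof -
  obtain S ws where H: "view_ok n t (loc (ex k) j) S ws \<and>
   supp (loc (ex (Suc k)) j) = (ws ` S = {coin (rnd (loc (ex k) j))} \<or> ws ` S = {False, True}) \<and>
   dec (loc (ex (Suc k)) j) = (if ws ` S = {coin (rnd (loc (ex k) j))} \<and> dec (loc (ex k) j) = None 
                        then Some (coin (rnd (loc (ex k) j)), rnd (loc (ex k) j)) else dec (loc (ex k) j))"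
    using step6_view[OF s6] by (elim exE) (rule that)
  have vo: "view_ok n t (loc (ex k) j) S ws" using H by (rule conjunct1)
  have X: "v \<in> ws ` S" "r < r' \<Longrightarrow> ws ` S = {v}" using factX[OF Safe_all j vo rk rr] by blast+
  have dd: "dec (loc (ex (Suc k)) j) = (if ws ` S = {coin (rnd (loc (ex k) j))} \<and> dec (loc (ex k) j) = None 
                        then Some (coin (rnd (loc (ex k) j)), rnd (loc (ex k) j)) else dec (loc (ex k) j))"
    using H by (elim conjE)
  show ?thesis
  proof (intro exI[of _ S] exI[of _ ws] conjI impI)
    show "view_ok n t (loc (ex k) j) S ws" by (rule vo)
    show "v \<in> ws ` S" by (rule X(1))
    show "ws ` S = {v}" if "r < r'" using X(2) that .
  qed (rule dd)
qed

lemma concl_i: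
  assumes j: "j \<in> NF" and rr: "r \<le> r'" and rk: "rnd (loc (ex k1) j) = r'"
  shows "\<exists>k2\<ge>k1. rnd (loc (ex k2) j) = r' \<and> flag n t (loc (ex k2) j) v"
proof -
  obtain k where k: "Suc r' \<le> rnd (loc (ex k) j)" using reach[OF _ j, of "Suc r'"] by auto
  have "Suc r' \<le> rnd (loc (ex (max k k1)) j)" using k rnd_mono[of k "max k k1" j] by simp
  then have lt: "r' < rnd (loc (ex (max k k1)) j)" by simp
  have "\<exists>k2\<ge>k1. rnd (loc (ex k2) j) = r' \<and> step6 n t coin j (ex k2) (ex (Suc k2))"
    by (rule leave[OF max.cobounded2 rk lt])
  then obtain k2 where k2: "k2 \<ge> k1" "rnd (loc (ex k2) j) = r'" "step6 n t coin j (ex k2) (ex (Suc k2))"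
    by blast
  obtain S ws where "view_ok n t (loc (ex k2) j) S ws" "v \<in> ws ` S"
    using step6_view_v[OF j k2(3) k2(2) rr] by (elim exE conjE) (rule that)
  then have "flag n t (loc (ex k2) j) v" by (rule view_ok_flag)
  then show ?thesis using k2 by blast
qed

end

context A2 begin

lemma mkDec:
  assumes "i \<in> NF" "dec (loc (ex k) i) = Some (v, r)"
  shows "\<exists>ki S1 ws1. Dec n t F props coin ex i v r ki S1 ws1 \<and> step6 n t coin i (ex ki) (ex (Suc ki))"
proof -
  obtain ki where K: "step6 n t coin i (ex ki) (ex (Suc ki)) \<and> rnd (loc (ex ki) i) = r \<and> coin r = v \<and>
    (\<exists>S ws. view_ok n t (loc (ex ki) i) S ws \<and> ws ` S = {v})"
    using dec_origin[OF assms] by (elim exE) (rule that)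
  have k0: "step6 n t coin i (ex ki) (ex (Suc ki))" "rnd (loc (ex ki) i) = r" "coin r = v"
    "\<exists>S ws. view_ok n t (loc (ex ki) i) S ws \<and> ws ` S = {v}"
    using K by simp_all
  from k0(4) obtain S1 ws1 where "view_ok n t (loc (ex ki) i) S1 ws1 \<and> ws1 ` S1 = {v}"
    by (elim exE) (rule that)
  then have "Dec n t F props coin ex i v r ki S1 ws1"
    using k0 assms(1) by (intro Dec.intro A2.intro[OF nt FS cF exe] Dec_axioms.intro) (simp_all add: conjunct1 conjunct2)
  then show ?thesis using k0(1) by (intro exI[of _ ki] exI[of _ S1] exI[of _ ws1] conjI)
qed

end


context A2 begin

lemma main:
  assumes i: "i \<in> NF" and d: "dec (loc (ex k) i) = Some (v, r)"
  shows "(\<forall>j \<rho> k1. j < n \<and> j \<notin> F \<and> r \<le> \<rho> \<and> rnd (loc (ex k1) j) = \<rho> \<longrightarrow>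
             (\<exists>k2\<ge>k1. rnd (loc (ex k2) j) = \<rho> \<and> flag n t (loc (ex k2) j) v))
       \<and> (\<forall>j k1 r'. j < n \<and> j \<notin> F \<longrightarrow> dec (loc (ex k1) j) \<noteq> Some (\<not> v, r'))
       \<and> (\<forall>j \<rho> k1. j < n \<and> j \<notin> F \<and> r < \<rho> \<and> rnd (loc (ex k1) j) = \<rho> \<longrightarrow>
             \<not> flag n t (loc (ex k1) j) (\<not> v))"
proof -
  obtain ki S1 ws1 where D: "Dec n t F props coin ex i v r ki S1 ws1"
    using mkDec[OF i d] by blast
  have P1: "\<forall>j \<rho> k1. j < n \<and> j \<notin> F \<and> r \<le> \<rho> \<and> rnd (loc (ex k1) j) = \<rho> \<longrightarrow>
             (\<exists>k2\<ge>k1. rnd (loc (ex k2) j) = \<rho> \<and> flag n t (loc (ex k2) j) v)"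
  proof (intro allI impI)
    fix j \<rho> k1 assume h: "j < n \<and> j \<notin> F \<and> r \<le> \<rho> \<and> rnd (loc (ex k1) j) = \<rho>"
    then have "j \<in> NF" unfolding NF_def by simp
    then show "\<exists>k2\<ge>k1. rnd (loc (ex k2) j) = \<rho> \<and> flag n t (loc (ex k2) j) v"
      using Dec.concl_i[OF D] h by blast
  qed
  have P3: "\<forall>j \<rho> k1. j < n \<and> j \<notin> F \<and> r < \<rho> \<and> rnd (loc (ex k1) j) = \<rho> \<longrightarrow>
             \<not> flag n t (loc (ex k1) j) (\<not> v)"
  proof (intro allI impI)
    fix j \<rho> k1 assume h: "j < n \<and> j \<notin> F \<and> r < \<rho> \<and> rnd (loc (ex k1) j) = \<rho>"
    then have "j \<in> NF" unfolding NF_def by simp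
    then show "\<not> flag n t (loc (ex k1) j) (\<not> v)"
      using Dec.concl_iii[OF D] h by blast
  qed
  have P2: "\<forall>j k1 r'. j < n \<and> j \<notin> F \<longrightarrow> dec (loc (ex k1) j) \<noteq> Some (\<not> v, r')"
  proof (intro allI impI notI)
    fix j k1 r' assume h: "j < n \<and> j \<notin> F" and dj: "dec (loc (ex k1) j) = Some (\<not> v, r')"
    then have jN: "j \<in> NF" unfolding NF_def by simp
    obtain kj S ws where D2: "Dec n t F props coin ex j (\<not> v) r' kj S ws"
      using mkDec[OF jN dj] by blast
    have vo2: "view_ok n t (loc (ex kj) j) S ws" by (rule Dec.vo1[OF D2])
    have ws2: "ws ` S = {\<not> v}" by (rule Dec.ws1[OF D2])
    have r2: "rnd (loc (ex kj) j) = r'" by (rule Dec.ri[OF D2])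
    have vo1: "view_ok n t (loc (ex ki) i) S1 ws1" by (rule Dec.vo1[OF D])
    have ws1: "ws1 ` S1 = {v}" by (rule Dec.ws1[OF D])
    have r1: "rnd (loc (ex ki) i) = r" by (rule Dec.ri[OF D])
    show False
    proof (cases "r \<le> r'")
      case True
      have "v \<in> ws ` S" by (rule Dec.factX(1)[OF D Dec.Safe_all[OF D] jN vo2 r2 True])
      then show False using ws2 by simp
    next
      case False
      then have lt: "r' < r" "r' \<le> r" by simp_all
      have "ws1 ` S1 = {\<not> v}" by (rule Dec.factX(2)[OF D2 Dec.Safe_all[OF D2] i vo1 r1 lt(2) lt(1)])
      then show False using ws1 by simp
    qed
  qed
  show ?thesis using P1 P2 P3 by blast
qed

end

theorem lemma13:
  fixes n t :: nat and F :: "nat set" and props coin :: "nat \<Rightarrow> bool"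
    and ex :: "nat \<Rightarrow> gstate" and i k r :: nat and v :: bool
  assumes "3 * t < n" and "F \<subseteq> {..<n}" and "card F \<le> t"
    and "execution n t F props coin ex"
    and "i < n" and "i \<notin> F" and "dec (loc (ex k) i) = Some (v, r)"
  shows "(\<forall>j \<rho> k1. j < n \<and> j \<notin> F \<and> r \<le> \<rho> \<and> rnd (loc (ex k1) j) = \<rho> \<longrightarrow>
             (\<exists>k2\<ge>k1. rnd (loc (ex k2) j) = \<rho> \<and> flag n t (loc (ex k2) j) v))
       \<and> (\<forall>j k1 r'. j < n \<and> j \<notin> F \<longrightarrow> dec (loc (ex k1) j) \<noteq> Some (\<not> v, r'))
       \<and> (\<forall>j \<rho> k1. j < n \<and> j \<notin> F \<and> r < \<rho> \<and> rnd (loc (ex k1) j) = \<rho> \<longrightarrow>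
             \<not> flag n t (loc (ex k1) j) (\<not> v))"
proof -
  interpret A2 n t F props coin ex using assms(1-4) by (rule A2.intro)
  have "i \<in> NF" using assms(5,6) unfolding NF_def by simp
  from main[OF this assms(7)] show ?thesis .
qed


end
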